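(* Let $\Gamma$ be a negative-definite plumbing forest. There is an isomorphism of abelian groups \[\mathbb{H}(\Gamma;\mathbb{Z})\cong\ker U\subset\mathbb{H}^+(\Gamma).\]
   Context: A plumbing forest $\Gamma$ is a finite forest with integer framings $m(v)$; the lattice $L=H_2(W_\Gamma)\cong\mathbb{Z}^{\text{vertices}}$ of the plumbed 4-manifold carries the intersection form. Characteristic elements $\mathrm{Char}(\Gamma)$ are $k\in\mathrm{Hom}(L,\mathbb{Z})$ with $\langle k,x\rangle\equiv x\cdot x\bmod 2$; $L$ acts by $x\cdot k=k+2x^*$, $x^*=(x,-)$, with orbits $[k_0]$. $\mathbb{H}(\Gamma;\mathbb{Z})$: the free abelian group on $\mathrm{Char}(\Gamma)$ modulo the relations (I) $k\sim0$ if $|\langle k,v\rangle|>-v^2$ for some vertex $v$; (II) $k\sim(-1)^{v^2}(k\mp2v^* )$ if $\langle k,v\rangle=\pm v^2$, where the pairing has $(v,v)=m(v)$ and $(v,w)=-1$ for adjacent $v,w$ (its isomorphism type is unchanged if instead adjacent vertices pair to $+1$ and the sign $(-1)^{v^2}$ is dropped). Némethi's lattice cohomology $\mathbb{H}^+(\Gamma)$: use the pairing with adjacent vertices pairing to $+1$. For $k_0\in\mathrm{Char}(\Gamma)$ define $w(x)=-((x,x)+\langle k_0,x\rangle)/2$ for $x\in L$; for a unit lattice cube $\Box$ in $\mathbb{R}^{|\Gamma|}$ (any dimension, vertices in $L$) set $w(\Box)=\max$ of $w$ over its vertices; let $S_n$ be the union of cubes with $w(\Box)\le n$. Then $\mathbb{H}^+(\Gamma,[k_0])=\bigoplus_n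 H^0(S_n;\mathbb{Z})$, with $U$ acting by the restriction $H^0(S_n)\to H^0(S_{n-1})$ induced by inclusion; it depends only on the orbit $[k_0]$, and $\mathbb{H}^+(\Gamma)=\bigoplus_{[k_0]}\mathbb{H}^+(\Gamma,[k_0])$ over all distinct orbits. *)

theory Defs
  imports "HOL-Analysis.Analysis" "HOL-Algebra.Free_Abelian_Groups"
begin

text \<open>A plumbing forest: vertices form a finite type 'v, E is the (symmetric,
 irreflexive, acyclic) adjacency relation, m the integer framing.\<close>

definition plumbing_forest :: "('v::finite \<Rightarrow> 'v \<Rightarrow> bool) \<Rightarrow> bool" where
  "plumbing_forest E \<longleftrightarrow> (\<forall>v w. E v w \<longleftrightarrow> E w v) \<and> (\<forall>v. \<not> E v v) \<and>
     \<not> (\<exists>xs. 3 \<le> length xs \<and> distinct xs \<and>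
          (\<forall>i<length xs. E (xs ! i) (xs ! (Suc i mod length xs))))"

text \<open>Pairing on L = Z^vertices (or its real extension): (v,v) = m v, adjacent
 vertices pair to s (s = 1 or s = -1), others to 0.\<close>

definition pair :: "'a::comm_ring_1 \<Rightarrow> ('v::finite \<Rightarrow> 'v \<Rightarrow> bool) \<Rightarrow> ('v \<Rightarrow> int)
    \<Rightarrow> ('v \<Rightarrow> 'a) \<Rightarrow> ('v \<Rightarrow> 'a) \<Rightarrow> 'a" where
  "pair s E m x y = (\<Sum>v\<in>UNIV. of_int (m v) * x v * y v)
      + s * (\<Sum>v\<in>UNIV. \<Sum>w\<in>UNIV. if E v w then x v * y w else 0)"

definition neg_definite :: "('v::finite \<Rightarrow> 'v \<Rightarrow> bool) \<Rightarrow> ('v \<Rightarrow> int) \<Rightarrow> bool" where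
  "neg_definite E m \<longleftrightarrow> (\<forall>x::'v \<Rightarrow> real. x \<noteq> (\<lambda>_. 0) \<longrightarrow> pair 1 E m x x < 0)"

definition basis :: "'v \<Rightarrow> 'v \<Rightarrow> int" where
  "basis u = (\<lambda>v. if v = u then 1 else 0)"

text \<open>x^* = (x,-), as an element of Hom(L,Z), represented by its values on the vertex basis.\<close>
definition dualf :: "int \<Rightarrow> ('v::finite \<Rightarrow> 'v \<Rightarrow> bool) \<Rightarrow> ('v \<Rightarrow> int) \<Rightarrow> ('v \<Rightarrow> int) \<Rightarrow> ('v \<Rightarrow> int)" where
  "dualf s E m x = (\<lambda>u. pair s E m x (basis u))"

text \<open>Evaluation <k,x> of k in Hom(L,Z) (given by its values on vertices) at x in L.\<close>
definition evalk :: "('v::finite \<Rightarrow> int) \<Rightarrow> ('v \<Rightarrow> int) \<Rightarrow> int" where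
  "evalk k x = (\<Sum>v\<in>UNIV. k v * x v)"

definition Char :: "int \<Rightarrow> ('v::finite \<Rightarrow> 'v \<Rightarrow> bool) \<Rightarrow> ('v \<Rightarrow> int) \<Rightarrow> ('v \<Rightarrow> int) set" where
  "Char s E m = {k. \<forall>x. evalk k x mod 2 = pair s E m x x mod 2}"

subsection \<open>The group H(Gamma; Z) (convention: adjacent vertices pair to -1)\<close>

definition HRel :: "('v::finite \<Rightarrow> 'v \<Rightarrow> bool) \<Rightarrow> ('v \<Rightarrow> int) \<Rightarrow> (('v \<Rightarrow> int) \<Rightarrow>\<^sub>0 int) set" where
  "HRel E m =
     {frag_of k | k. k \<in> Char (-1) E m \<and> (\<exists>v. \<bar>k v\<bar> > - m v)}
   \<union> {frag_of k - frag_cmul (if even (m v) then 1 else -1)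
          (frag_of (\<lambda>u. k u - 2 * dualf (-1) E m (basis v) u)) | k v.
        k \<in> Char (-1) E m \<and> k v = m v}
   \<union> {frag_of k - frag_cmul (if even (m v) then 1 else -1)
          (frag_of (\<lambda>u. k u + 2 * dualf (-1) E m (basis v) u)) | k v.
        k \<in> Char (-1) E m \<and> k v = - m v}"

definition HGroup :: "('v::finite \<Rightarrow> 'v \<Rightarrow> bool) \<Rightarrow> ('v \<Rightarrow> int) \<Rightarrow> (('v \<Rightarrow> int) \<Rightarrow>\<^sub>0 int) set monoid" where
  "HGroup E m = free_Abelian_group (Char (-1) E m)
      Mod generate (free_Abelian_group (Char (-1) E m)) (HRel E m)"

subsection \<open>Nemethi's lattice cohomology H^+ (adjacent vertices pair to +1)\<close>

definition wt :: "('v::finite \<Rightarrow> 'v \<Rightarrow> bool) \<Rightarrow> ('v \<Rightarrow> int) \<Rightarrow> ('v \<Rightarrow> int) \<Rightarrow> ('v \<Rightarrow> int) \<Rightarrow> int" where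
  "wt E m k0 x = (- (pair 1 E m x x + evalk k0 x)) div 2"

definition cube_pts :: "('v::finite \<Rightarrow> int) \<Rightarrow> 'v set \<Rightarrow> (real^'v) set" where
  "cube_pts a I = {p. \<forall>v. if v \<in> I then of_int (a v) \<le> p $ v \<and> p $ v \<le> of_int (a v) + 1
                         else p $ v = of_int (a v)}"

definition cube_verts :: "('v::finite \<Rightarrow> int) \<Rightarrow> 'v set \<Rightarrow> ('v \<Rightarrow> int) set" where
  "cube_verts a I = {(\<lambda>v. a v + (if v \<in> J then 1 else 0)) | J. J \<subseteq> I}"

definition cube_wt :: "('v::finite \<Rightarrow> 'v \<Rightarrow> bool) \<Rightarrow> ('v \<Rightarrow> int) \<Rightarrow> ('v \<Rightarrow> int) \<Rightarrow> ('v \<Rightarrow> int) \<Rightarrow> 'v set \<Rightarrow> int" where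
  "cube_wt E m k0 a I = Max (wt E m k0 ` cube_verts a I)"

definition Sset :: "('v::finite \<Rightarrow> 'v \<Rightarrow> bool) \<Rightarrow> ('v \<Rightarrow> int) \<Rightarrow> ('v \<Rightarrow> int) \<Rightarrow> int \<Rightarrow> (real^'v) set" where
  "Sset E m k0 n = \<Union> {cube_pts a I | a I. cube_wt E m k0 a I \<le> n}"

text \<open>H^0(S;Z): integer functions on S constant on path components (extended by 0 off S).\<close>
definition H0 :: "(real^'v::finite) set \<Rightarrow> (real^'v \<Rightarrow> int) set" where
  "H0 S = {f. (\<forall>p. p \<notin> S \<longrightarrow> f p = 0) \<and> (\<forall>p q. path_component S p q \<longrightarrow> f p = f q)}"

definition orbit :: "('v::finite \<Rightarrow> 'v \<Rightarrow> bool) \<Rightarrow> ('v \<Rightarrow> int) \<Rightarrow> ('v \<Rightarrow> int) \<Rightarrow> ('v \<Rightarrow> int) set" where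
  "orbit E m k = {(\<lambda>u. k u + 2 * dualf 1 E m x u) | x. True}"

definition Orbits :: "('v::finite \<Rightarrow> 'v \<Rightarrow> bool) \<Rightarrow> ('v \<Rightarrow> int) \<Rightarrow> ('v \<Rightarrow> int) set set" where
  "Orbits E m = orbit E m ` Char 1 E m"

definition rep :: "('v \<Rightarrow> int) set \<Rightarrow> ('v \<Rightarrow> int)" where
  "rep Ob = (SOME k. k \<in> Ob)"

text \<open>H^+(Gamma) = direct sum over orbits [k0] and n in Z of H^0(S_n).\<close>
definition HPlus :: "('v::finite \<Rightarrow> 'v \<Rightarrow> bool) \<Rightarrow> ('v \<Rightarrow> int)
    \<Rightarrow> (('v \<Rightarrow> int) set \<times> int \<Rightarrow> real^'v \<Rightarrow> int) monoid" where
  "HPlus E m = \<lparr>carrier = {F. (\<forall>Ob n. F (Ob, n) \<in> H0 (Sset E m (rep Ob) n))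
                            \<and> (\<forall>Ob n. Ob \<notin> Orbits E m \<longrightarrow> F (Ob, n) = (\<lambda>_. 0))
                            \<and> finite {i. F i \<noteq> (\<lambda>_. 0)}},
                monoid.mult = (\<lambda>F G i p. F i p + G i p),
                one = (\<lambda>i p. 0)\<rparr>"

text \<open>U: H^0(S_{n+1}) -> H^0(S_n), restriction along the inclusion S_n in S_{n+1}.\<close>
definition Umap :: "('v::finite \<Rightarrow> 'v \<Rightarrow> bool) \<Rightarrow> ('v \<Rightarrow> int)
    \<Rightarrow> (('v \<Rightarrow> int) set \<times> int \<Rightarrow> real^'v \<Rightarrow> int) \<Rightarrow> (('v \<Rightarrow> int) set \<times> int \<Rightarrow> real^'v \<Rightarrow> int)" where
  "Umap E m F = (\<lambda>(Ob, n) p. if p \<in> Sset E m (rep Ob) n then F (Ob, n + 1) p else 0)"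

definition KerU :: "('v::finite \<Rightarrow> 'v \<Rightarrow> bool) \<Rightarrow> ('v \<Rightarrow> int)
    \<Rightarrow> (('v \<Rightarrow> int) set \<times> int \<Rightarrow> real^'v \<Rightarrow> int) monoid" where
  "KerU E m = subgroup_generated (HPlus E m) (kernel (HPlus E m) (HPlus E m) (Umap E m))"

end

theory Submission
  imports Defs
begin


lemma forest_leaf:
  fixes E :: "'v::finite \<Rightarrow> 'v \<Rightarrow> bool"
  assumes F: "plumbing_forest E" and A: "A \<noteq> {}"
  shows "\<exists>x\<in>A. \<exists>u. \<forall>y\<in>A. E x y \<longrightarrow> y = u"
proof (rule ccontr)
  assume nl: "\<not> ?thesis"
  have nl2: "\<exists>y1\<in>A. \<exists>y2\<in>A. y1 \<noteq> y2 \<and> E x y1 \<and> E x y2" if "x \<in> A" for x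
  proof -
    from nl that obtain y1 where "y1 \<in> A" "E x y1" by blast
    moreover from nl that obtain y2 where "y2 \<in> A" "E x y2" "y2 \<noteq> y1" by blast
    ultimately show ?thesis by blast
  qed
  have sym: "E a b \<longleftrightarrow> E b a" and irr: "\<not> E a a" for a b using F unfolding plumbing_forest_def by auto
  have nocyc: "\<not> (3 \<le> length xs \<and> distinct xs \<and> (\<forall>i<length xs. E (xs ! i) (xs ! (Suc i mod length xs))))" for xs
    using F unfolding plumbing_forest_def by blast
  define P where "P xs \<longleftrightarrow> xs \<noteq> [] \<and> set xs \<subseteq> A \<and> distinct xs \<and> (\<forall>i. Suc i < length xs \<longrightarrow> E (xs!i) (xs!Suc i))" for xs
  from A obtain a where a: "a \<in> A" by blast
  have Pa: "P [a]" using a by (simp add: P_def)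
  have bnd: "\<forall>y. P y \<longrightarrow> length y < card A + 1"
  proof (intro allI impI)
    fix y assume "P y"
    then have "card (set y) \<le> card A" "length y = card (set y)"
      by (auto simp: P_def intro!: card_mono distinct_card[symmetric])
    then show "length y < card A + 1" by simp
  qed
  obtain xs where Pxs: "P xs" and mx: "\<forall>y. P y \<longrightarrow> length y \<le> length xs"
    using Lattices_Big.ex_has_greatest_nat[of P "[a]" length, OF Pa bnd] by blast
  define L where "L = length xs"
  define z where "z = last xs"
  have L1: "L \<ge> 1" using Pxs by (cases xs) (auto simp: P_def L_def)
  have zA: "z \<in> A" using Pxs by (auto simp: P_def z_def)
  have zL: "xs ! (L - 1) = z" using Pxs by (simp add: P_def z_def L_def last_conv_nth)
  obtain y where yA: "y \<in> A" and Ezy: "E z y" and yprev: "L \<ge> 2 \<longrightarrow> y \<noteq> xs ! (L - 2)"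
  proof -
    obtain y1 y2 where "y1 \<in> A" "y2 \<in> A" "y1 \<noteq> y2" "E z y1" "E z y2" using nl2[OF zA] by blast
    then show ?thesis using that by metis
  qed
  show False
  proof (cases "y \<in> set xs")
    case False
    have "\<forall>i. Suc i < length (xs @ [y]) \<longrightarrow> E ((xs @ [y])!i) ((xs @ [y])!Suc i)"
    proof (intro allI impI)
      fix i assume "Suc i < length (xs @ [y])"
      then have "Suc i < length xs \<or> i = L - 1" using L_def by auto
      then show "E ((xs @ [y])!i) ((xs @ [y])!Suc i)"
      proof
        assume "Suc i < length xs" then show ?thesis using Pxs by (simp add: P_def nth_append)
      next
        assume "i = L - 1" then show ?thesis using zL Ezy L1 L_def by (simp add: nth_append)
      qed
    qed
    then have "P (xs @ [y])"
      using Pxs False yA unfolding P_def by auto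
    with mx show False by fastforce
  next
    case True
    then obtain i where i: "i < L" "xs ! i = y" by (auto simp: in_set_conv_nth L_def)
    have "i \<noteq> L - 1" using i zL Ezy irr by auto
    moreover have "i \<noteq> L - 2 \<or> L < 2" using yprev i by auto
    ultimately have i3: "i + 3 \<le> L" using i L1 by (cases "L < 2") auto
    define ys where "ys = drop i xs"
    have lys: "length ys = L - i" by (simp add: ys_def L_def)
    have "3 \<le> length ys" using lys i3 by simp
    moreover have "distinct ys" using Pxs by (simp add: ys_def P_def)
    moreover have "\<forall>j<length ys. E (ys ! j) (ys ! (Suc j mod length ys))"
    proof (intro allI impI)
      fix j assume j: "j < length ys"
      show "E (ys ! j) (ys ! (Suc j mod length ys))"
      proof (cases "Suc j < length ys")
        case True
        then show ?thesis using Pxs lys unfolding P_def ys_def L_def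
          by (auto simp: add.commute)
      next
        case False
        then have "Suc j = length ys" using j by simp
        then have "i + j = L - 1" using lys by simp
        then have "ys ! j = z" "ys ! (Suc j mod length ys) = y"
          using lys zL i i3 \<open>Suc j = length ys\<close> by (auto simp: ys_def L_def)
        then show ?thesis using Ezy by simp
      qed
    qed
    ultimately show False using nocyc by blast
  qed
qed

lemma forest_coloring:
  fixes E :: "'v::finite \<Rightarrow> 'v \<Rightarrow> bool"
  assumes F: "plumbing_forest E"
  shows "\<exists>\<sigma>::'v \<Rightarrow> bool. \<forall>a b. E a b \<longrightarrow> \<sigma> a \<noteq> \<sigma> b"
proof -
  have irr: "\<not> E a a" for a using F unfolding plumbing_forest_def by auto
  have sym: "E a b \<longleftrightarrow> E b a" for a b using F unfolding plumbing_forest_def by auto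
  have "\<exists>\<sigma>::'v \<Rightarrow> bool. \<forall>a\<in>B. \<forall>b\<in>B. E a b \<longrightarrow> \<sigma> a \<noteq> \<sigma> b" if "finite B" for B :: "'v set"
    using that
  proof (induction B rule: finite_remove_induct)
    case empty then show ?case by simp
  next
    case (remove A)
    obtain x u where x: "x \<in> A" and xu: "\<forall>y\<in>A. E x y \<longrightarrow> y = u"
      using forest_leaf[OF F remove(2)] by blast
    obtain \<sigma> :: "'v \<Rightarrow> bool" where s: "\<forall>a\<in>A - {x}. \<forall>b\<in>A - {x}. E a b \<longrightarrow> \<sigma> a \<noteq> \<sigma> b"
      using remove(4)[OF x] by blast
    define \<sigma>' where "\<sigma>' = \<sigma>(x := \<not> \<sigma> u)"
    have "\<forall>a\<in>A. \<forall>b\<in>A. E a b \<longrightarrow> \<sigma>' a \<noteq> \<sigma>' b"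
    proof (intro ballI impI)
      fix a b assume ab: "a \<in> A" "b \<in> A" "E a b"
      show "\<sigma>' a \<noteq> \<sigma>' b"
      proof (cases "a = x")
        case True
        then have "b = u" "b \<noteq> x" using xu ab irr by auto
        then show ?thesis using True by (simp add: \<sigma>'_def)
      next
        case False
        show ?thesis
        proof (cases "b = x")
          case True
          then have "a = u" using xu ab sym by auto
          then show ?thesis using True False by (simp add: \<sigma>'_def)
        next
          case False2: False
          then show ?thesis using s ab False by (simp add: \<sigma>'_def)
        qed
      qed
    qed
    then show ?case by blast
  qed
  from this[of UNIV] show ?thesis by simp
qed


lemma sum_basis_r: fixes u :: "'v::finite" shows "(\<Sum>w\<in>UNIV. f w * basis u w) = (f u :: int)"
proof -
  have "(\<Sum>w\<in>UNIV. f w * basis u w) = (\<Sum>w\<in>UNIV. if w = u then f u else 0)"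
    by (rule sum.cong) (auto simp: basis_def)
  also have "\<dots> = f u" by simp
  finally show ?thesis .
qed
lemma sum_basis_l: fixes u :: "'v::finite" shows "(\<Sum>w\<in>UNIV. basis u w * f w) = (f u :: int)"
  using sum_basis_r[of f u] by (simp add: mult.commute)

lemma pair_add_left: "pair s E m (\<lambda>v. x v + y v) z = pair s E m x z + pair s E m y z"
  unfolding pair_def by (simp add: algebra_simps sum.distrib if_distrib sum.If_cases)
lemma pair_add_right: "pair s E m z (\<lambda>v. x v + y v) = pair s E m z x + pair s E m z y"
  unfolding pair_def by (simp add: algebra_simps sum.distrib if_distrib sum.If_cases)
lemma pair_cmul_left: "pair s E m (\<lambda>v. c * x v) z = c * pair s E m x z"
  unfolding pair_def by (simp add: algebra_simps sum_distrib_left if_distrib sum.If_cases)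
lemma pair_cmul_right: "pair s E m z (\<lambda>v. c * x v) = c * pair s E m z x"
  unfolding pair_def by (simp add: algebra_simps sum_distrib_left if_distrib sum.If_cases)
lemma pair_sym:
  assumes "\<And>v w. E v w \<longleftrightarrow> E w v"
  shows "pair s E m x y = pair s E m y x"
proof -
  have "(\<Sum>v\<in>UNIV. \<Sum>w\<in>UNIV. if E v w then x v * y w else 0) = (\<Sum>w\<in>UNIV. \<Sum>v\<in>UNIV. if E v w then x v * y w else 0)"
    by (rule sum.swap)
  also have "\<dots> = (\<Sum>v\<in>UNIV. \<Sum>w\<in>UNIV. if E v w then y v * x w else 0)"
    using assms by (intro sum.cong refl) (simp add: mult.commute)
  finally show ?thesis unfolding pair_def by (simp add: mult.commute mult.left_commute)
qed

lemma dualf_expl: "dualf s E m x u = m u * x u + s * (\<Sum>v\<in>UNIV. if E v u then x v else 0)"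
proof -
  have a: "(\<Sum>v\<in>UNIV. of_int (m v) * x v * basis u v) = m u * x u"
    using sum_basis_r[of "\<lambda>v. m v * x v" u] by simp
  have b: "(\<Sum>w\<in>UNIV. if E v w then x v * basis u w else 0) = (if E v u then x v else 0)" for v
  proof -
    have "(\<Sum>w\<in>UNIV. if E v w then x v * basis u w else 0) = (\<Sum>w\<in>UNIV. (if E v w then x v else 0) * basis u w)"
      by (rule sum.cong) auto
    then show ?thesis using sum_basis_r[of "\<lambda>w. if E v w then x v else 0" u] by simp
  qed
  show ?thesis unfolding dualf_def pair_def by (simp only: a b)
qed

lemma evalk_dualf: "evalk (dualf s E m x) y = pair s E m x y"
proof -
  have "evalk (dualf s E m x) y = (\<Sum>u\<in>UNIV. m u * x u * y u) + s * (\<Sum>u\<in>UNIV. \<Sum>v\<in>UNIV. if E v u then x v * y u else 0)"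
    unfolding evalk_def dualf_expl
    by (simp add: algebra_simps sum.distrib sum_distrib_left sum_distrib_right if_distrib cong: if_cong)
  also have "(\<Sum>u\<in>UNIV. \<Sum>v\<in>UNIV. if E v u then x v * y u else 0) = (\<Sum>v\<in>UNIV. \<Sum>u\<in>UNIV. if E v u then x v * y u else 0)"
    by (rule sum.swap)
  finally show ?thesis unfolding pair_def by simp
qed

lemma evalk_add_right: "evalk k (\<lambda>v. x v + y v) = evalk k x + evalk k y"
  by (simp add: evalk_def algebra_simps sum.distrib)
lemma evalk_add_left: "evalk (\<lambda>v. k v + l v) x = evalk k x + evalk l x"
  by (simp add: evalk_def algebra_simps sum.distrib)
lemma evalk_cmul_left: "evalk (\<lambda>v. c * k v) x = c * evalk k x"
  by (simp add: evalk_def algebra_simps sum_distrib_left)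
lemma evalk_cmul_right: "evalk k (\<lambda>v. c * x v) = c * evalk k x"
  by (simp add: evalk_def algebra_simps sum_distrib_left)
lemma evalk_basis: "evalk k (basis v) = k v"
  by (simp add: evalk_def sum_basis_r)

lemma dualf_add: "dualf s E m (\<lambda>v. x v + y v) = (\<lambda>u. dualf s E m x u + dualf s E m y u)"
  by (simp add: dualf_def pair_add_left)
lemma dualf_cmul: "dualf s E m (\<lambda>v. c * x v) = (\<lambda>u. c * dualf s E m x u)"
  by (simp add: dualf_def pair_cmul_left)

lemma pair_basis_basis: "pair s E m (basis v) (basis u) = (if u = v then m v else 0) + (if E v u then s else 0)"
proof -
  have "pair s E m (basis v) (basis u) = dualf s E m (basis v) u" by (simp add: dualf_def)
  also have "\<dots> = m u * basis v u + s * (\<Sum>w\<in>UNIV. (if E w u then 1 else 0) * basis v w)"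
  proof -
    have "(\<Sum>w\<in>UNIV. if E w u then basis v w else 0) = (\<Sum>w\<in>UNIV. (if E w u then 1 else 0) * basis v w)"
      by (rule sum.cong) auto
    then show ?thesis unfolding dualf_expl by simp
  qed
  also have "\<dots> = (if u = v then m v else 0) + (if E v u then s else 0)"
    by (simp add: sum_basis_r) (simp add: basis_def)
  finally show ?thesis .
qed

lemma pair_of_int: "pair (of_int s) E m (\<lambda>v. of_int (x v)) (\<lambda>v. of_int (y v)) = (of_int (pair s E m x y) :: 'a::comm_ring_1)"
  by (simp add: pair_def if_distrib cong: if_cong)


locale PF =
  fixes E :: "'v::finite \<Rightarrow> 'v \<Rightarrow> bool" and m :: "'v \<Rightarrow> int"
  assumes forest: "plumbing_forest E" and negdef: "neg_definite E m"
begin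

lemma Esym: "E a b \<longleftrightarrow> E b a" using forest unfolding plumbing_forest_def by auto
lemma Eirr: "\<not> E a a" using forest unfolding plumbing_forest_def by auto

definition col :: "'v \<Rightarrow> bool" where "col = (SOME c. \<forall>a b. E a b \<longrightarrow> c a \<noteq> c b)"
lemma col: "E a b \<Longrightarrow> col a \<noteq> col b"
  using someI_ex[OF forest_coloring[OF forest]] unfolding col_def by blast

definition sig :: "'v \<Rightarrow> int" where "sig v = (if col v then 1 else -1)"
lemma sig_sq [simp]: "sig u * sig u = 1" by (simp add: sig_def)
lemma sig_adj: "E a b \<Longrightarrow> sig a = - sig b" using col[of a b] by (auto simp: sig_def)
lemma sig_cases: "sig u = 1 \<or> sig u = -1" by (simp add: sig_def)
lemma sig_adj_mult: "E a b \<Longrightarrow> sig a * sig b = -1"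
  using sig_adj[of a b] sig_cases[of b] by auto

definition sg :: "('v \<Rightarrow> int) \<Rightarrow> ('v \<Rightarrow> int)" where "sg k = (\<lambda>u. sig u * k u)"
lemma sg_sg [simp]: "sg (sg k) = k" by (simp add: sg_def mult.assoc[symmetric])

lemma pair_sg: "pair (-1) E m (sg x) (sg y) = pair 1 E m x y"
proof -
  have "(\<Sum>v\<in>UNIV. \<Sum>w\<in>UNIV. if E v w then sig v * x v * (sig w * y w) else 0)
      = - (\<Sum>v\<in>UNIV. \<Sum>w\<in>UNIV. if E v w then x v * y w else 0)"
    unfolding sum_negf[symmetric]
  proof (intro sum.cong refl)
    fix v w show "(if E v w then sig v * x v * (sig w * y w) else 0) = - (if E v w then x v * y w else 0)"
    proof (cases "E v w")
      case True
      have "sig v * x v * (sig w * y w) = (sig v * sig w) * (x v * y w)" by (simp only: mult_ac)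
      then show ?thesis using sig_adj_mult[OF True] True by simp
    qed simp
  qed
  moreover have "(\<Sum>v\<in>UNIV. of_int (m v) * (sig v * x v) * (sig v * y v)) = (\<Sum>v\<in>UNIV. of_int (m v) * x v * y v)"
  proof (intro sum.cong refl)
    fix v show "of_int (m v) * (sig v * x v) * (sig v * y v) = of_int (m v) * x v * y v"
    proof -
      have "of_int (m v) * (sig v * x v) * (sig v * y v) = (sig v * sig v) * (of_int (m v) * x v * y v)" by (simp only: mult_ac)
      then show ?thesis by simp
    qed
  qed
  ultimately show ?thesis unfolding pair_def sg_def by simp
qed

lemma evalk_sg: "evalk (sg k) x = evalk k (sg x)"
  by (simp add: evalk_def sg_def algebra_simps)

lemma Char_sg: "k \<in> Char (-1) E m \<longleftrightarrow> sg k \<in> Char 1 E m"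
proof
  assume a: "k \<in> Char (-1) E m"
  show "sg k \<in> Char 1 E m" unfolding Char_def
  proof (intro CollectI allI)
    fix x
    have "evalk k (sg x) mod 2 = pair (-1) E m (sg x) (sg x) mod 2" using a unfolding Char_def by blast
    then show "evalk (sg k) x mod 2 = pair 1 E m x x mod 2" by (simp only: evalk_sg pair_sg)
  qed
next
  assume a: "sg k \<in> Char 1 E m"
  show "k \<in> Char (-1) E m" unfolding Char_def
  proof (intro CollectI allI)
    fix x
    have "evalk (sg k) (sg x) mod 2 = pair 1 E m (sg x) (sg x) mod 2" using a unfolding Char_def by blast
    moreover have "evalk (sg k) (sg x) = evalk k x" by (simp only: evalk_sg sg_sg)
    moreover have "pair 1 E m (sg x) (sg x) = pair (-1) E m x x" using pair_sg[of "sg x" "sg x"] by (simp only: sg_sg)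
    ultimately show "evalk k x mod 2 = pair (-1) E m x x mod 2" by simp
  qed
qed

lemma sg_dualf: "sg (dualf (-1) E m (basis v)) = (\<lambda>u. sig v * dualf 1 E m (basis v) u)"
proof
  fix u
  show "sg (dualf (- 1) E m (basis v)) u = sig v * dualf 1 E m (basis v) u"
  proof (cases "u = v")
    case True then show ?thesis by (simp add: sg_def dualf_def pair_basis_basis Eirr)
  next
    case False
    show ?thesis
    proof (cases "E v u")
      case True
      then have "sig u = - sig v" using sig_adj Esym by metis
      then show ?thesis using True False by (simp add: sg_def dualf_def pair_basis_basis)
    qed (use False in \<open>simp add: sg_def dualf_def pair_basis_basis\<close>)
  qed
qed

lemma dualf_m1: "dualf (-1) E m (basis v) = sg (\<lambda>u. sig v * dualf 1 E m (basis v) u)"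
  using arg_cong[OF sg_dualf, of sg] by simp

definition pt :: "('v \<Rightarrow> int) \<Rightarrow> ('v \<Rightarrow> int) \<Rightarrow> ('v \<Rightarrow> int)" where
  "pt r x = (\<lambda>u. r u + 2 * dualf 1 E m x u)"

lemma evalk_pt: "evalk (pt r x) y = evalk r y + 2 * pair 1 E m x y"
  by (simp add: pt_def evalk_add_left evalk_cmul_left evalk_dualf)

lemma Char_pt: "r \<in> Char 1 E m \<Longrightarrow> pt r x \<in> Char 1 E m"
  unfolding Char_def by (auto simp: evalk_pt)

lemma pt_pt: "pt (pt r x) y = pt r (\<lambda>u. x u + y u)"
  by (simp add: pt_def dualf_add algebra_simps)
lemma pt_0: "pt r (\<lambda>_. 0) = r"
  using dualf_cmul[of 1 E m 0 "\<lambda>_. 0"] by (simp add: pt_def)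

lemma orbit_pt_def: "orbit E m k = range (pt k)"
  by (auto simp: orbit_def pt_def)

lemma in_orbit_self: "k \<in> orbit E m k"
  using pt_0[of k] unfolding orbit_pt_def by (metis rangeI)

lemma orbit_pt: "orbit E m (pt r x) = orbit E m r"
proof -
  have "pt (pt r x) y \<in> range (pt r)" for y by (simp add: pt_pt)
  moreover have "pt r y \<in> range (pt (pt r x))" for y
  proof -
    have "pt r y = pt (pt r x) (\<lambda>u. y u - x u)" by (simp add: pt_pt)
    then show ?thesis by simp
  qed
  ultimately show ?thesis by (auto simp: orbit_pt_def)
qed

lemma rep_in: "rep (orbit E m k) \<in> orbit E m k"
  unfolding rep_def using in_orbit_self by (metis someI_ex)

lemma negdef_int: fixes x :: "'v \<Rightarrow> int" shows "x \<noteq> (\<lambda>_. 0) \<Longrightarrow> pair 1 E m x x < 0"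
proof -
  assume "x \<noteq> (\<lambda>_. 0)"
  then have "(\<lambda>v. real_of_int (x v)) \<noteq> (\<lambda>_. 0)" by (auto simp: fun_eq_iff)
  then have "pair 1 E m (\<lambda>v. real_of_int (x v)) (\<lambda>v. real_of_int (x v)) < 0"
    using negdef unfolding neg_definite_def by blast
  then show ?thesis using pair_of_int[of 1 E m x x, where 'a=real] by simp
qed

lemma pt_inj: assumes "pt r x = pt r y" shows "x = y"
proof (rule ccontr)
  assume ne: "x \<noteq> y"
  define z where "z = (\<lambda>u. x u + (-1) * y u)"
  have "z \<noteq> (\<lambda>_. 0)" using ne by (auto simp: z_def fun_eq_iff)
  then have neg: "pair 1 E m z z < 0" by (rule negdef_int)
  have "dualf 1 E m x = dualf 1 E m y" using assms by (auto simp: pt_def fun_eq_iff)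
  moreover have "dualf 1 E m z = (\<lambda>u. dualf 1 E m x u + (-1) * dualf 1 E m y u)"
    unfolding z_def by (simp only: dualf_add dualf_cmul)
  ultimately have "dualf 1 E m z = (\<lambda>_. 0)" by simp
  then have "pair 1 E m z z = 0" using evalk_dualf[of 1 E m z z] by (simp add: evalk_def)
  with neg show False by simp
qed

definition X :: "('v \<Rightarrow> int) \<Rightarrow> ('v \<Rightarrow> int) \<Rightarrow> ('v \<Rightarrow> int)" where
  "X r K = (THE x. K = pt r x)"

lemma X_pt: "X r (pt r x) = x"
  unfolding X_def using pt_inj by blast

lemma orbit_rep: "K = pt (rep (orbit E m K)) (X (rep (orbit E m K)) K)"
proof -
  obtain z where "rep (orbit E m K) = pt K z" using rep_in[of K] by (auto simp: orbit_pt_def)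
  then have "K = pt (rep (orbit E m K)) (\<lambda>u. - z u)"
    using pt_pt[of K z "\<lambda>u. - z u"] pt_0[of K] by simp
  then show ?thesis by (metis X_pt)
qed

lemma orbit_rep_eq: "orbit E m (rep (orbit E m K)) = orbit E m K"
  by (metis orbit_pt orbit_rep)

definition xp :: "('v \<Rightarrow> int) \<Rightarrow> 'v \<Rightarrow> ('v \<Rightarrow> int)" where
  "xp x v = (\<lambda>u. x u + basis v u)"

lemma Char_even: "r \<in> Char 1 E m \<Longrightarrow> even (pair 1 E m x x + evalk r x)"
proof -
  assume "r \<in> Char 1 E m"
  then have "evalk r x mod 2 = pair 1 E m x x mod 2" unfolding Char_def by blast
  then show ?thesis by (metis dvd_add_triv_right_iff even_add mod_mod_trivial mod_eq_dvd_iff even_iff_mod_2_eq_zero)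
qed

lemma wt2: "r \<in> Char 1 E m \<Longrightarrow> 2 * wt E m r x = - (pair 1 E m x x + evalk r x)"
  unfolding wt_def using Char_even[of r x] by (metis dvd_minus_iff dvd_mult_div_cancel)

lemma pair_xp: "pair 1 E m (xp x v) (xp x v) = pair 1 E m x x + 2 * dualf 1 E m x v + m v"
proof -
  have s: "pair 1 E m (basis v) x = pair 1 E m x (basis v)" by (rule pair_sym[OF Esym])
  show ?thesis
    unfolding xp_def pair_add_left pair_add_right using s
    by (simp add: dualf_def pair_basis_basis Eirr)
qed

lemma wt_xp: assumes "r \<in> Char 1 E m"
  shows "2 * wt E m r (xp x v) = 2 * wt E m r x - (pt r x v + m v)"
  using wt2[OF assms, of x] wt2[OF assms, of "xp x v"] pair_xp[of x v]
  unfolding xp_def by (simp add: evalk_add_right evalk_basis pt_def)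

lemma pt_xp: "pt r (xp x v) = (\<lambda>u. pt r x u + 2 * dualf 1 E m (basis v) u)"
  by (simp add: pt_def xp_def dualf_add algebra_simps)

lemma dualf_basis_self: "dualf s E m (basis v) v = m v"
  by (simp add: dualf_def pair_basis_basis Eirr)

end


lemma FA_sub:
  assumes N: "subgroup N (free_Abelian_group S)"
  shows FA_sub_add: "a \<in> N \<Longrightarrow> b \<in> N \<Longrightarrow> a + b \<in> N"
    and FA_sub_neg: "a \<in> N \<Longrightarrow> - a \<in> N"
    and FA_sub_diff: "a \<in> N \<Longrightarrow> b \<in> N \<Longrightarrow> a - b \<in> N"
    and FA_sub_cmul: "a \<in> N \<Longrightarrow> frag_cmul c a \<in> N"
    and FA_sub_0: "0 \<in> N"
proof -
  have sub: "a \<in> N \<Longrightarrow> Poly_Mapping.keys a \<subseteq> S" for a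
    using subgroup.subset[OF N] by (metis carrier_free_Abelian_group_iff subsetD)
  show add: "a \<in> N \<Longrightarrow> b \<in> N \<Longrightarrow> a + b \<in> N" for a b
    using subgroup.m_closed[OF N, of a b] by simp
  show neg: "a \<in> N \<Longrightarrow> - a \<in> N" for a
    using subgroup.m_inv_closed[OF N, of a] sub[of a] by simp
  show "a \<in> N \<Longrightarrow> b \<in> N \<Longrightarrow> a - b \<in> N" for a b
    using add[of a "-b"] neg[of b] by simp
  show "a \<in> N \<Longrightarrow> frag_cmul c a \<in> N" for a
    using group.subgroup_int_pow_closed[OF group_free_Abelian_group N, of a c] sub[of a] by simp
  show "0 \<in> N" using subgroup.one_closed[OF N] by simp
qed

context PF
begin

lemma frag_cmul_diff2: "frag_cmul c (a - b) = frag_cmul c a - frag_cmul c b"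
  by (rule poly_mapping_eqI) (simp add: lookup_minus algebra_simps)

lemma comb3: "c1 * c2 = c3 \<Longrightarrow> (a - frag_cmul c1 b) + frag_cmul c1 (b - frag_cmul c2 d) = a - frag_cmul c3 d"
  by (simp add: frag_cmul_diff2)

definition adj :: "('v \<Rightarrow> int) \<Rightarrow> ('v \<Rightarrow> int) \<Rightarrow> bool" where
  "adj x y \<longleftrightarrow> (\<exists>v. y = xp x v \<or> x = xp y v)"

definition stp :: "('v \<Rightarrow> int) \<Rightarrow> int \<Rightarrow> ('v \<Rightarrow> int) \<Rightarrow> ('v \<Rightarrow> int) \<Rightarrow> bool" where
  "stp r n x y \<longleftrightarrow> adj x y \<and> wt E m r x \<le> n \<and> wt E m r y \<le> n"

definition conn :: "('v \<Rightarrow> int) \<Rightarrow> int \<Rightarrow> ('v \<Rightarrow> int) \<Rightarrow> ('v \<Rightarrow> int) \<Rightarrow> bool" where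
  "conn r n = (stp r n)\<^sup>*\<^sup>*"

definition good :: "('v \<Rightarrow> int) \<Rightarrow> ('v \<Rightarrow> int) \<Rightarrow> bool" where
  "good r x \<longleftrightarrow> (\<forall>y. conn r (wt E m r x) x y \<longrightarrow> wt E m r x \<le> wt E m r y)"

definition cls :: "('v \<Rightarrow> int) \<Rightarrow> int \<Rightarrow> ('v \<Rightarrow> int) \<Rightarrow> ('v \<Rightarrow> int) set" where
  "cls r n x = {y. conn r n x y}"

lemma adj_sym: "adj x y \<Longrightarrow> adj y x" by (auto simp: adj_def)
lemma stp_sym: "stp r n x y \<Longrightarrow> stp r n y x" by (auto simp: stp_def adj_sym)

lemma conn_sym: "conn r n x y \<Longrightarrow> conn r n y x"
  unfolding conn_def
proof (induction rule: rtranclp_induct)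
  case (step y z) then show ?case
    by (meson converse_rtranclp_into_rtranclp stp_sym)
qed simp

lemma conn_trans: "conn r n x y \<Longrightarrow> conn r n y z \<Longrightarrow> conn r n x z"
  unfolding conn_def by simp

lemma conn_refl: "conn r n x x" unfolding conn_def by simp

lemma conn_wt: "conn r n x y \<Longrightarrow> wt E m r x \<le> n \<Longrightarrow> wt E m r y \<le> n"
  unfolding conn_def by (induction rule: rtranclp_induct) (auto simp: stp_def)

lemma good_wt: "good r x \<Longrightarrow> conn r (wt E m r x) x y \<Longrightarrow> wt E m r y = wt E m r x"
  using conn_wt[of r "wt E m r x" x y] unfolding good_def by force

lemma good_conn:
  assumes g: "good r x" and c: "conn r (wt E m r x) x y"
  shows "good r y" "wt E m r y = wt E m r x" "cls r (wt E m r y) y = cls r (wt E m r x) x"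
proof -
  show w: "wt E m r y = wt E m r x" by (rule good_wt[OF g c])
  show "good r y" unfolding good_def w
    using g c conn_sym conn_trans unfolding good_def by (metis w)
  show "cls r (wt E m r y) y = cls r (wt E m r x) x"
    unfolding w cls_def using c conn_sym conn_trans by blast
qed

lemma wt_xp_eq: "r \<in> Char 1 E m \<Longrightarrow> wt E m r (xp x v) = wt E m r x \<longleftrightarrow> pt r x v = - m v"
  using wt_xp[of r x v] by auto
lemma wt_xp_lt: "r \<in> Char 1 E m \<Longrightarrow> wt E m r (xp x v) < wt E m r x \<longleftrightarrow> pt r x v > - m v"
  using wt_xp[of r x v] by auto
lemma pt_xp_v: "pt r (xp x v) v = pt r x v + 2 * m v"
  by (simp add: pt_xp dualf_basis_self)
lemma wt_xp_gt: "r \<in> Char 1 E m \<Longrightarrow> wt E m r x < wt E m r (xp x v) \<longleftrightarrow> pt r (xp x v) v < m v"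
  using wt_xp[of r x v] pt_xp_v[of r x v] by auto

definition kpt :: "('v \<Rightarrow> int) \<Rightarrow> ('v \<Rightarrow> int) \<Rightarrow> ('v \<Rightarrow> int)" where
  "kpt r x = sg (pt r x)"

definition eps :: "'v \<Rightarrow> int" where "eps v = (if even (m v) then 1 else -1)"
definition par :: "('v \<Rightarrow> int) \<Rightarrow> int" where "par x = (if even (evalk m x) then 1 else -1)"

lemma par_xp: "par (xp x v) = par x * eps v"
  by (simp add: par_def eps_def xp_def evalk_add_right evalk_basis)
lemma eps_sq [simp]: "eps v * eps v = 1" by (simp add: eps_def)
lemma par_sq [simp]: "par x * par x = 1" by (simp add: par_def)

lemma kpt_Char: "r \<in> Char 1 E m \<Longrightarrow> kpt r x \<in> Char (-1) E m"
  unfolding kpt_def using Char_sg Char_pt by (metis sg_sg)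

lemma kpt_xp: "kpt r (xp x v) = (\<lambda>u. kpt r x u + 2 * sig v * dualf (-1) E m (basis v) u)"
proof
  fix u
  have "dualf (-1) E m (basis v) u = sig u * (sig v * dualf 1 E m (basis v) u)"
    using dualf_m1[of v] by (simp add: sg_def fun_eq_iff)
  then have "sig v * dualf (-1) E m (basis v) u = (sig v * sig v) * sig u * dualf 1 E m (basis v) u"
    by (simp add: mult_ac)
  then have "sig v * dualf (-1) E m (basis v) u = sig u * dualf 1 E m (basis v) u" by simp
  then show "kpt r (xp x v) u = kpt r x u + 2 * sig v * dualf (- 1) E m (basis v) u"
    by (simp add: kpt_def sg_def pt_xp algebra_simps)
qed

lemma Char_add_dualf: "k \<in> Char s E m \<Longrightarrow> (\<lambda>u. k u + 2 * dualf s E m x u) \<in> Char s E m"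
  unfolding Char_def by (auto simp: evalk_add_left evalk_cmul_left evalk_dualf)
lemma Char_diff_dualf: "k \<in> Char s E m \<Longrightarrow> (\<lambda>u. k u - 2 * dualf s E m x u) \<in> Char s E m"
  using Char_add_dualf[of k s "\<lambda>u. - x u"] dualf_cmul[of s E m "-1" x] by simp

lemma keys_rel: "Poly_Mapping.keys (frag_of a - frag_cmul c (frag_of b)) \<subseteq> {a, b}"
proof -
  have "Poly_Mapping.keys (frag_of a - frag_cmul c (frag_of b)) \<subseteq> Poly_Mapping.keys (frag_of a) \<union> Poly_Mapping.keys (frag_cmul c (frag_of b))"
    by (rule keys_diff)
  also have "\<dots> \<subseteq> {a} \<union> {b}" using keys_cmul[of c "frag_of b"] by (auto simp: keys_frag_of)
  finally show ?thesis by auto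
qed

lemma HRel_carrier: "HRel E m \<subseteq> carrier (free_Abelian_group (Char (-1) E m))"
proof
  fix a assume "a \<in> HRel E m"
  then show "a \<in> carrier (free_Abelian_group (Char (-1) E m))"
    unfolding HRel_def
    apply (elim UnE CollectE exE conjE)
    subgoal by (simp add: keys_frag_of)
    subgoal for k v
      using Char_diff_dualf[of k "-1" "basis v"] keys_rel[of k _ "(\<lambda>u. k u - 2 * dualf (-1) E m (basis v) u)"]
      by (simp only: carrier_free_Abelian_group_iff) (meson dual_order.trans empty_subsetI insert_subset)
    subgoal for k v
      using Char_add_dualf[of k "-1" "basis v"] keys_rel[of k _ "(\<lambda>u. k u + 2 * dualf (-1) E m (basis v) u)"]
      by (simp only: carrier_free_Abelian_group_iff) (meson dual_order.trans empty_subsetI insert_subset)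
    done
qed

definition NN :: "(('v \<Rightarrow> int) \<Rightarrow>\<^sub>0 int) set" where
  "NN = generate (free_Abelian_group (Char (-1) E m)) (HRel E m)"

lemma NN_sub: "subgroup NN (free_Abelian_group (Char (-1) E m))"
  unfolding NN_def by (rule group.generate_is_subgroup[OF group_free_Abelian_group HRel_carrier])

lemma HRel_NN: "a \<in> HRel E m \<Longrightarrow> a \<in> NN"
  unfolding NN_def by (rule generate.incl)

lemma rel_edge:
  assumes r: "r \<in> Char 1 E m" and w: "wt E m r (xp x v) = wt E m r x"
  shows "frag_of (kpt r x) - frag_cmul (eps v) (frag_of (kpt r (xp x v))) \<in> HRel E m"
proof -
  define k where "k = kpt r x"
  have kC: "k \<in> Char (-1) E m" using kpt_Char[OF r] by (simp add: k_def)
  have Kv: "pt r x v = - m v" using wt_xp_eq[OF r] w by simp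
  have kv: "k v = - sig v * m v" by (simp add: k_def kpt_def sg_def Kv)
  show ?thesis
  proof (cases "sig v = 1")
    case True
    then have eq2: "kpt r (xp x v) = (\<lambda>u. k u + 2 * dualf (-1) E m (basis v) u)"
      by (simp add: kpt_xp k_def)
    have "k v = - m v" using kv True by simp
    then have mem: "frag_of k - frag_cmul (eps v) (frag_of (\<lambda>u. k u + 2 * dualf (-1) E m (basis v) u)) \<in> HRel E m"
      using kC unfolding HRel_def eps_def by blast
    show ?thesis unfolding eq2 k_def[symmetric] using mem .
  next
    case False
    then have F: "sig v = -1" using sig_cases by blast
    then have eq2: "kpt r (xp x v) = (\<lambda>u. k u - 2 * dualf (-1) E m (basis v) u)"
      by (simp add: kpt_xp k_def)
    have "k v = m v" using kv F by simp
    then have mem: "frag_of k - frag_cmul (eps v) (frag_of (\<lambda>u. k u - 2 * dualf (-1) E m (basis v) u)) \<in> HRel E m"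
      using kC unfolding HRel_def eps_def by blast
    show ?thesis unfolding eq2 k_def[symmetric] using mem .
  qed
qed

lemma rel_dead:
  assumes r: "r \<in> Char 1 E m" and a: "adj x y" and w: "wt E m r y < wt E m r x"
  shows "frag_of (kpt r x) \<in> HRel E m"
proof -
  define k where "k = kpt r x"
  have kC: "k \<in> Char (-1) E m" using kpt_Char[OF r] by (simp add: k_def)
  have kv: "\<bar>k u\<bar> = \<bar>pt r x u\<bar>" for u
    using sig_cases[of u] by (auto simp: k_def kpt_def sg_def)
  obtain v where "y = xp x v \<or> x = xp y v" using a by (auto simp: adj_def)
  then have "\<bar>k v\<bar> > - m v"
  proof
    assume "y = xp x v"
    then have "pt r x v > - m v" using wt_xp_lt[OF r] w by simp
    then show ?thesis using kv[of v] by linarith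
  next
    assume "x = xp y v"
    then have "pt r x v < m v" using wt_xp_gt[OF r] w by simp
    then show ?thesis using kv[of v] by linarith
  qed
  then have "frag_of k \<in> HRel E m" using kC unfolding HRel_def by blast
  then show ?thesis by (simp add: k_def)
qed

lemma edge_NN:
  assumes r: "r \<in> Char 1 E m" and a: "adj y z" and w: "wt E m r z = wt E m r y"
  shows "frag_of (kpt r y) - frag_cmul (par y * par z) (frag_of (kpt r z)) \<in> NN"
proof -
  obtain v where "z = xp y v \<or> y = xp z v" using a by (auto simp: adj_def)
  then show ?thesis
  proof
    assume z: "z = xp y v"
    have "par y * par z = eps v" by (simp add: z par_xp mult.assoc[symmetric])
    then show ?thesis using rel_edge[OF r, of y v] w z HRel_NN by simp
  next
    assume y: "y = xp z v"
    have pe: "par y * par z = eps v" by (simp add: y par_xp mult_ac)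
    have "frag_of (kpt r z) - frag_cmul (eps v) (frag_of (kpt r y)) \<in> NN"
      using rel_edge[OF r, of z v] w y HRel_NN by simp
    then have "frag_cmul (- eps v) (frag_of (kpt r z) - frag_cmul (eps v) (frag_of (kpt r y))) \<in> NN"
      by (rule FA_sub_cmul[OF NN_sub])
    moreover have "frag_cmul (- eps v) (frag_of (kpt r z) - frag_cmul (eps v) (frag_of (kpt r y)))
        = frag_of (kpt r y) - frag_cmul (eps v) (frag_of (kpt r z))"
      by (simp add: frag_cmul_distrib2 diff_conv_add_uminus)
    ultimately show ?thesis using pe by simp
  qed
qed

lemma chain_NN:
  assumes r: "r \<in> Char 1 E m" and g: "good r x" and c: "conn r (wt E m r x) x y"
  shows "frag_of (kpt r x) - frag_cmul (par x * par y) (frag_of (kpt r y)) \<in> NN"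
  using c unfolding conn_def
proof (induction rule: rtranclp_induct)
  case base
  then show ?case using FA_sub_0[OF NN_sub] by simp
next
  case (step y z)
  have cy: "conn r (wt E m r x) x y" using step(1) by (simp add: conn_def)
  have cz: "conn r (wt E m r x) x z" using step(1,2) by (simp add: conn_def)
  have wy: "wt E m r y = wt E m r x" by (rule good_wt[OF g cy])
  have wz: "wt E m r z = wt E m r x" by (rule good_wt[OF g cz])
  have e: "frag_of (kpt r y) - frag_cmul (par y * par z) (frag_of (kpt r z)) \<in> NN"
    using edge_NN[OF r, of y z] step(2) wy wz by (simp add: stp_def)
  have "(frag_of (kpt r x) - frag_cmul (par x * par y) (frag_of (kpt r y)))
      + frag_cmul (par x * par y) (frag_of (kpt r y) - frag_cmul (par y * par z) (frag_of (kpt r z))) \<in> NN"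
    using FA_sub_add[OF NN_sub step(3) FA_sub_cmul[OF NN_sub e]] .
  moreover have "par x * par y * (par y * par z) = par x * par z"
  proof -
    have "par x * par y * (par y * par z) = par x * (par y * par y) * par z" by (simp only: mult_ac)
    then show ?thesis by simp
  qed
  ultimately show ?case by (simp add: comb3)
qed

lemma dead_NN:
  assumes r: "r \<in> Char 1 E m" and c: "conn r n x y" and wx: "wt E m r x = n" and wy: "wt E m r y < n"
  shows "frag_of (kpt r x) \<in> NN"
proof -
  have "frag_of (kpt r x) \<in> NN \<or> (wt E m r y = n \<and> frag_of (kpt r x) - frag_cmul (par x * par y) (frag_of (kpt r y)) \<in> NN)"
    using c unfolding conn_def
  proof (induction rule: rtranclp_induct)
    case base
    then show ?case using FA_sub_0[OF NN_sub] wx by simp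
  next
    case (step y z)
    show ?case
    proof (cases "frag_of (kpt r x) \<in> NN")
      case False
      with step(3) have wy: "wt E m r y = n" and h: "frag_of (kpt r x) - frag_cmul (par x * par y) (frag_of (kpt r y)) \<in> NN"
        by auto
      have az: "adj y z" "wt E m r z \<le> n" using step(2) by (auto simp: stp_def)
      show ?thesis
      proof (cases "wt E m r z = n")
        case True
        have e: "frag_of (kpt r y) - frag_cmul (par y * par z) (frag_of (kpt r z)) \<in> NN"
          using edge_NN[OF r az(1)] True wy by simp
        have "(frag_of (kpt r x) - frag_cmul (par x * par y) (frag_of (kpt r y)))
          + frag_cmul (par x * par y) (frag_of (kpt r y) - frag_cmul (par y * par z) (frag_of (kpt r z))) \<in> NN"
          using FA_sub_add[OF NN_sub h FA_sub_cmul[OF NN_sub e]] .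
        moreover have "par x * par y * (par y * par z) = par x * par z"
        proof -
    have "par x * par y * (par y * par z) = par x * (par y * par y) * par z" by (simp only: mult_ac)
    then show ?thesis by simp
  qed
        ultimately show ?thesis using True by (simp add: comb3)
      next
        case False
        then have "wt E m r z < wt E m r y" using az wy by simp
        then have "frag_of (kpt r y) \<in> NN" using rel_dead[OF r az(1)] HRel_NN by blast
        then have "(frag_of (kpt r x) - frag_cmul (par x * par y) (frag_of (kpt r y)))
           + frag_cmul (par x * par y) (frag_of (kpt r y)) \<in> NN"
          using FA_sub_add[OF NN_sub h FA_sub_cmul[OF NN_sub]] by blast
        then show ?thesis by simp
      qed
    qed simp
  qed
  then show ?thesis using wy by auto
qed

end


context PF
begin

definition xm :: "('v \<Rightarrow> int) \<Rightarrow> 'v \<Rightarrow> ('v \<Rightarrow> int)" where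
  "xm x v = (\<lambda>u. x u - basis v u)"
lemma xp_xm [simp]: "xp (xm x v) v = x" by (simp add: xp_def xm_def)
lemma xm_xp [simp]: "xm (xp x v) v = x" by (simp add: xp_def xm_def)

definition Tset :: "(('v \<Rightarrow> int) set \<times> int \<times> ('v \<Rightarrow> int) set) set" where
  "Tset = {(Ob, n, C) | Ob n C x. Ob \<in> Orbits E m \<and> good (rep Ob) x \<and> n = wt E m (rep Ob) x \<and> C = cls (rep Ob) n x}"

definition rk :: "('v \<Rightarrow> int) \<Rightarrow> ('v \<Rightarrow> int)" where "rk k = rep (orbit E m (sg k))"
definition xk :: "('v \<Rightarrow> int) \<Rightarrow> ('v \<Rightarrow> int)" where "xk k = X (rk k) (sg k)"
definition nk :: "('v \<Rightarrow> int) \<Rightarrow> int" where "nk k = wt E m (rk k) (xk k)"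
definition tau where "tau k = (orbit E m (sg k), nk k, cls (rk k) (nk k) (xk k))"
definition gk where "gk k = good (rk k) (xk k)"

lemma rep_Char: "K \<in> Char 1 E m \<Longrightarrow> rep (orbit E m K) \<in> Char 1 E m"
  using rep_in[of K] Char_pt by (auto simp: orbit_pt_def)

lemma rk_Char: "k \<in> Char (-1) E m \<Longrightarrow> rk k \<in> Char 1 E m"
  unfolding rk_def using Char_sg rep_Char by blast

lemma kpt_xk: "kpt (rk k) (xk k) = k"
  unfolding kpt_def rk_def xk_def using orbit_rep[of "sg k"] by simp

lemma sg_kpt: "sg (kpt r x) = pt r x" by (simp add: kpt_def)

lemma orbit_is_Ob: "Ob \<in> Orbits E m \<Longrightarrow> orbit E m (rep Ob) = Ob"
  unfolding Orbits_def using orbit_rep_eq by blast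

lemma rk_kpt: "Ob \<in> Orbits E m \<Longrightarrow> rk (kpt (rep Ob) x) = rep Ob"
  unfolding rk_def sg_kpt orbit_pt using orbit_is_Ob by simp

lemma xk_kpt: "Ob \<in> Orbits E m \<Longrightarrow> xk (kpt (rep Ob) x) = x"
  unfolding xk_def using rk_kpt by (simp add: sg_kpt X_pt)

lemma Ob_kpt: "Ob \<in> Orbits E m \<Longrightarrow> orbit E m (sg (kpt (rep Ob) x)) = Ob"
  unfolding sg_kpt orbit_pt using orbit_is_Ob by simp

lemma rep_Orbit_Char: "Ob \<in> Orbits E m \<Longrightarrow> rep Ob \<in> Char 1 E m"
  unfolding Orbits_def using rep_Char by blast

lemma Ok_Orbits: "k \<in> Char (-1) E m \<Longrightarrow> orbit E m (sg k) \<in> Orbits E m"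
  unfolding Orbits_def using Char_sg by blast

lemma tau_T: "k \<in> Char (-1) E m \<Longrightarrow> gk k \<Longrightarrow> tau k \<in> Tset"
  unfolding Tset_def tau_def gk_def nk_def using Ok_Orbits[of k] by (auto simp: rk_def)

definition xt where "xt t = (SOME x. good (rep (fst t)) x \<and> fst (snd t) = wt E m (rep (fst t)) x \<and> snd (snd t) = cls (rep (fst t)) (fst (snd t)) x)"
definition kt where "kt t = kpt (rep (fst t)) (xt t)"

lemma xt_prop:
  assumes "t \<in> Tset"
  shows "good (rep (fst t)) (xt t)" "fst (snd t) = wt E m (rep (fst t)) (xt t)"
        "snd (snd t) = cls (rep (fst t)) (fst (snd t)) (xt t)" "fst t \<in> Orbits E m"
proof -
  have ex: "\<exists>x. good (rep (fst t)) x \<and> fst (snd t) = wt E m (rep (fst t)) x \<and> snd (snd t) = cls (rep (fst t)) (fst (snd t)) x"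
    using assms unfolding Tset_def by auto
  show "good (rep (fst t)) (xt t)" "fst (snd t) = wt E m (rep (fst t)) (xt t)"
        "snd (snd t) = cls (rep (fst t)) (fst (snd t)) (xt t)"
    using someI_ex[OF ex] unfolding xt_def by blast+
  show "fst t \<in> Orbits E m" using assms unfolding Tset_def by auto
qed

lemma kt_Char: "t \<in> Tset \<Longrightarrow> kt t \<in> Char (-1) E m"
  unfolding kt_def using xt_prop(4) rep_Orbit_Char kpt_Char by blast

lemma kt_props:
  assumes t: "t \<in> Tset"
  shows "rk (kt t) = rep (fst t)" "xk (kt t) = xt t" "gk (kt t)" "tau (kt t) = t"
proof -
  have Ob: "fst t \<in> Orbits E m" by (rule xt_prop(4)[OF t])
  show r: "rk (kt t) = rep (fst t)" unfolding kt_def using rk_kpt[OF Ob] .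
  show x: "xk (kt t) = xt t" unfolding kt_def using xk_kpt[OF Ob] .
  show "gk (kt t)" unfolding gk_def r x using xt_prop(1)[OF t] .
  show "tau (kt t) = t" unfolding tau_def nk_def r x
    using Ob_kpt[OF Ob, of "xt t"] xt_prop(2,3)[OF t] unfolding kt_def by (cases t) auto
qed

definition phi :: "(('v \<Rightarrow> int) \<Rightarrow>\<^sub>0 int) \<Rightarrow> ((('v \<Rightarrow> int) set \<times> int \<times> ('v \<Rightarrow> int) set) \<Rightarrow>\<^sub>0 int)" where
  "phi = frag_extend (\<lambda>k. if gk k then frag_cmul (par (xk k)) (frag_of (tau k)) else 0)"

definition psi where
  "psi = frag_extend (\<lambda>t. frag_cmul (par (xt t)) (frag_of (kt t)))"

abbreviation "FH \<equiv> free_Abelian_group (Char (-1) E m)"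
abbreviation "FT \<equiv> free_Abelian_group Tset"

lemma phi_hom: "phi \<in> hom FH FT"
proof (rule homI)
  fix c assume c: "c \<in> carrier FH"
  show "phi c \<in> carrier FT"
  proof -
    have "Poly_Mapping.keys (phi c) \<subseteq> (\<Union>k\<in>Poly_Mapping.keys c. Poly_Mapping.keys (if gk k then frag_cmul (par (xk k)) (frag_of (tau k)) else 0))"
      unfolding phi_def by (rule keys_frag_extend)
    also have "\<dots> \<subseteq> Tset"
    proof (rule UN_least)
      fix k assume "k \<in> Poly_Mapping.keys c"
      then have "k \<in> Char (-1) E m" using c by auto
      then show "Poly_Mapping.keys (if gk k then frag_cmul (par (xk k)) (frag_of (tau k)) else 0) \<subseteq> Tset"
        using tau_T[of k] keys_cmul[of _ "frag_of (tau k)"] by (auto simp: keys_frag_of)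
    qed
    finally show ?thesis by simp
  qed
next
  fix a b assume "a \<in> carrier FH" "b \<in> carrier FH"
  then show "phi (a \<otimes>\<^bsub>FH\<^esub> b) = phi a \<otimes>\<^bsub>FT\<^esub> phi b"
    by (simp add: phi_def frag_extend_add)
qed

lemma phi_group_hom: "group_hom FH FT phi"
  by (simp add: group_hom_def group_hom_axioms_def phi_hom)

lemma phi_kt: "t \<in> Tset \<Longrightarrow> phi (frag_cmul (par (xt t)) (frag_of (kt t))) = frag_of t"
  using kt_props[of t] by (simp add: phi_def frag_extend_cmul)

lemma phi_onto: "phi ` carrier FH = carrier FT"
proof
  show "phi ` carrier FH \<subseteq> carrier FT" using phi_hom by (auto simp: hom_def)
next
  show "carrier FT \<subseteq> phi ` carrier FH"
  proof
    fix a assume "a \<in> carrier FT"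
    then have ka: "Poly_Mapping.keys a \<subseteq> Tset" by simp
    show "a \<in> phi ` carrier FH"
    proof (rule free_Abelian_group_induct[of a Tset "\<lambda>a. a \<in> phi ` carrier FH"])
      show "Poly_Mapping.keys a \<subseteq> Tset" by (rule ka)
    next
      have "phi 0 = 0" by (simp add: phi_def)
      moreover have "(0::('v \<Rightarrow> int) \<Rightarrow>\<^sub>0 int) \<in> carrier FH" by simp
      ultimately show "0 \<in> phi ` carrier FH" by force
    next
      fix x y assume "Poly_Mapping.keys x \<subseteq> Tset" "Poly_Mapping.keys y \<subseteq> Tset" "x \<in> phi ` carrier FH" "y \<in> phi ` carrier FH"
      then obtain x' y' where "x' \<in> carrier FH" "y' \<in> carrier FH" "x = phi x'" "y = phi y'" by blast
      note xy = this
      have "x' - y' \<in> carrier FH" using xy(1,2) keys_diff[of x' y'] by auto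
      moreover have "phi (x' - y') = x - y" using xy(3,4) by (simp add: phi_def frag_extend_diff)
      ultimately show "x - y \<in> phi ` carrier FH" by force
    next
      fix t assume t: "t \<in> Tset"
      have "frag_cmul (par (xt t)) (frag_of (kt t)) \<in> carrier FH"
        using kt_Char[OF t] keys_cmul[of "par (xt t)" "frag_of (kt t)"] by (simp add: keys_frag_of) blast
      then show "frag_of t \<in> phi ` carrier FH" using phi_kt[OF t] by (metis image_eqI)
    qed
  qed
qed

end


context PF
begin

lemma sg_kk: "k \<in> Char (-1) E m \<Longrightarrow> sg k = pt (rk k) (xk k)"
  using kpt_xk[of k] by (metis sg_kpt)

lemma Ob_rk: "k \<in> Char (-1) E m \<Longrightarrow> rk k = rep (orbit E m (sg k)) \<and> orbit E m (sg k) \<in> Orbits E m"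
  using Ok_Orbits by (simp add: rk_def)

lemma one_step: "adj x y \<Longrightarrow> wt E m r y \<le> wt E m r x \<Longrightarrow> conn r (wt E m r x) x y"
  unfolding conn_def by (rule r_into_rtranclp) (simp add: stp_def)

lemma phi_edge:
  assumes k: "k \<in> Char (-1) E m" and a: "adj (xk k) x'" and w: "wt E m (rk k) x' = wt E m (rk k) (xk k)"
  shows "phi (frag_of k) = frag_cmul (par (xk k) * par x') (phi (frag_of (kpt (rk k) x')))"
proof -
  define r where "r = rk k"
  define x where "x = xk k"
  define Ob where "Ob = orbit E m (sg k)"
  have Ob: "Ob \<in> Orbits E m" "r = rep Ob" using Ob_rk[OF k] by (auto simp: r_def Ob_def)
  define k' where "k' = kpt r x'"
  have rk': "rk k' = r" using rk_kpt[OF Ob(1)] Ob(2) by (simp add: k'_def)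
  have xk': "xk k' = x'" using xk_kpt[OF Ob(1)] Ob(2) by (simp add: k'_def)
  have Ob': "orbit E m (sg k') = Ob" using Ob_kpt[OF Ob(1)] Ob(2) by (simp add: k'_def)
  have c1: "conn r (wt E m r x) x x'" using one_step[of x x' r] a w by (simp add: r_def x_def)
  have c2: "conn r (wt E m r x') x' x" using conn_sym[OF c1] w by (simp add: r_def x_def)
  have gg: "gk k \<longleftrightarrow> gk k'"
    unfolding gk_def rk' xk' r_def[symmetric] x_def[symmetric]
    using good_conn(1)[OF _ c1] good_conn(1)[OF _ c2] by blast
  have tt: "tau k = tau k'"
  proof -
    have "nk k = nk k'" unfolding nk_def rk' xk' r_def[symmetric] x_def[symmetric] using w by (simp add: r_def x_def)
    moreover have "cls r (nk k) x = cls r (nk k) x'"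
      unfolding cls_def nk_def r_def[symmetric] x_def[symmetric]
      using c1 c2 conn_sym conn_trans by blast
    ultimately show ?thesis unfolding tau_def rk' xk' Ob' using Ob_def r_def x_def by simp
  qed
  show ?thesis
  proof (cases "gk k")
    case True
    then have "gk k'" using gg by simp
    then show ?thesis using True tt unfolding phi_def k'_def[symmetric] r_def[symmetric] x_def[symmetric]
      by (simp add: xk' x_def mult.assoc)
  next
    case False
    then have "\<not> gk k'" using gg by simp
    then show ?thesis using False unfolding phi_def k'_def[symmetric] r_def[symmetric] by simp
  qed
qed

lemma sg_shift: "sg (\<lambda>u. k u + 2 * c * dualf (-1) E m (basis v) u) = (\<lambda>u. sg k u + 2 * (c * sig v) * dualf 1 E m (basis v) u)"
proof
  fix u
  have "sig u * dualf (-1) E m (basis v) u = sig v * dualf 1 E m (basis v) u"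
    using fun_cong[OF sg_dualf[of v], of u] by (simp add: sg_def)
  then show "sg (\<lambda>u. k u + 2 * c * dualf (- 1) E m (basis v) u) u = sg k u + 2 * (c * sig v) * dualf 1 E m (basis v) u"
    by (simp add: sg_def algebra_simps)
qed

lemma pt_xm: "pt r (xm x v) = (\<lambda>u. pt r x u - 2 * dualf 1 E m (basis v) u)"
  using pt_xp[of r "xm x v" v] by (simp add: fun_eq_iff)

lemma gen_edge:
  assumes k: "k \<in> Char (-1) E m" and c: "c = 1 \<or> c = -1" and kv: "sg k v = - (c * sig v) * m v"
  shows "phi (frag_of k) = frag_cmul (eps v) (phi (frag_of (\<lambda>u. k u + 2 * c * dualf (-1) E m (basis v) u)))"
proof -
  define r where "r = rk k"
  define x where "x = xk k"
  define k' where "k' = (\<lambda>u. k u + 2 * c * dualf (-1) E m (basis v) u)"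
  have K: "sg k = pt r x" using sg_kk[OF k] by (simp add: r_def x_def)
  have rC: "r \<in> Char 1 E m" using rk_Char[OF k] by (simp add: r_def)
  have d: "c * sig v = 1 \<or> c * sig v = -1" using c sig_cases[of v] by auto
  then show ?thesis
  proof
    assume d1: "c * sig v = 1"
    have "sg k' = pt r (xp x v)" unfolding k'_def sg_shift d1 K pt_xp by simp
    then have k'e: "k' = kpt r (xp x v)" unfolding kpt_def by (metis sg_sg)
    have Kv: "pt r x v = - m v" using kv d1 K by simp
    have w: "wt E m r (xp x v) = wt E m r x" using wt_xp_eq[OF rC] Kv by simp
    have "adj x (xp x v)" by (auto simp: adj_def)
    then have "phi (frag_of k) = frag_cmul (par x * par (xp x v)) (phi (frag_of (kpt r (xp x v))))"
      using phi_edge[OF k] w by (simp add: r_def x_def)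
    moreover have "par x * par (xp x v) = eps v" by (simp add: par_xp mult.assoc[symmetric])
    ultimately show ?thesis using k'e k'_def by simp
  next
    assume d1: "c * sig v = -1"
    have "sg k' = pt r (xm x v)" unfolding k'_def sg_shift d1 K pt_xm by simp
    then have k'e: "k' = kpt r (xm x v)" unfolding kpt_def by (metis sg_sg)
    have Kv: "pt r x v = m v" using kv d1 K by simp
    have "pt r (xm x v) v = - m v" using pt_xp_v[of r "xm x v" v] Kv by simp
    then have w: "wt E m r (xm x v) = wt E m r x" using wt_xp_eq[OF rC, of "xm x v" v] by simp
    have "adj x (xm x v)" by (auto simp: adj_def intro: exI[of _ v])
    then have "phi (frag_of k) = frag_cmul (par x * par (xm x v)) (phi (frag_of (kpt r (xm x v))))"
      using phi_edge[OF k] w by (simp add: r_def x_def)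
    moreover have "par x * par (xm x v) = eps v"
      using par_xp[of "xm x v" v] by (simp add: mult_ac)
    ultimately show ?thesis using k'e k'_def by simp
  qed
qed

lemma not_good_dead:
  assumes k: "k \<in> Char (-1) E m" and kv: "\<bar>k v\<bar> > - m v"
  shows "\<not> gk k"
proof -
  define r where "r = rk k"
  define x where "x = xk k"
  have K: "sg k = pt r x" using sg_kk[OF k] by (simp add: r_def x_def)
  have rC: "r \<in> Char 1 E m" using rk_Char[OF k] by (simp add: r_def)
  have "\<bar>sg k v\<bar> = \<bar>k v\<bar>" using sig_cases[of v] by (auto simp: sg_def)
  then have Kv: "\<bar>pt r x v\<bar> > - m v" using kv K by simp
  have "\<exists>y. adj x y \<and> wt E m r y < wt E m r x"
  proof (cases "pt r x v > - m v")
    case True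
    then show ?thesis using wt_xp_lt[OF rC] by (auto simp: adj_def)
  next
    case False
    then have "pt r (xp (xm x v) v) v < m v" using Kv by simp
    then have "wt E m r (xm x v) < wt E m r x" using wt_xp_gt[OF rC, of "xm x v" v] by simp
    moreover have "adj x (xm x v)" by (auto simp: adj_def intro: exI[of _ v])
    ultimately show ?thesis by blast
  qed
  then obtain y where "adj x y" "wt E m r y < wt E m r x" by blast
  then have "conn r (wt E m r x) x y" "\<not> wt E m r x \<le> wt E m r y" using one_step[of x y r] by auto
  then show ?thesis unfolding gk_def good_def r_def[symmetric] x_def[symmetric] by blast
qed

lemma HRel_kernel: "HRel E m \<subseteq> kernel FH FT phi"
proof
  fix a assume a: "a \<in> HRel E m"
  have car: "a \<in> carrier FH" using HRel_carrier a by blast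
  have "phi a = 0"
    using a unfolding HRel_def
  proof (elim UnE CollectE exE conjE)
    fix k v assume "a = frag_of k" "k \<in> Char (-1) E m" "- m v < \<bar>k v\<bar>"
    moreover have "\<not> gk k" by (rule not_good_dead) fact+
    ultimately show "phi a = 0" by (simp add: phi_def)
  next
    fix k v assume e: "a = frag_of k - frag_cmul (if even (m v) then 1 else - 1) (frag_of (\<lambda>u. k u - 2 * dualf (- 1) E m (basis v) u))"
      and k: "k \<in> Char (-1) E m" and kv: "k v = m v"
    have "sg k v = - ((-1) * sig v) * m v" using kv by (simp add: sg_def)
    from gen_edge[OF k _ this] have "phi (frag_of k) = frag_cmul (eps v) (phi (frag_of (\<lambda>u. k u - 2 * dualf (- 1) E m (basis v) u)))"
      by simp
    then show "phi a = 0" unfolding e by (simp add: phi_def frag_extend_diff frag_extend_cmul eps_def)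
  next
    fix k v assume e: "a = frag_of k - frag_cmul (if even (m v) then 1 else - 1) (frag_of (\<lambda>u. k u + 2 * dualf (- 1) E m (basis v) u))"
      and k: "k \<in> Char (-1) E m" and kv: "k v = - m v"
    have "sg k v = - (1 * sig v) * m v" using kv by (simp add: sg_def)
    from gen_edge[OF k _ this] have "phi (frag_of k) = frag_cmul (eps v) (phi (frag_of (\<lambda>u. k u + 2 * dualf (- 1) E m (basis v) u)))"
      by simp
    then show "phi a = 0" unfolding e by (simp add: phi_def frag_extend_diff frag_extend_cmul eps_def)
  qed
  then show "a \<in> kernel FH FT phi" using car by (simp add: kernel_def)
qed

lemma NN_kernel: "NN \<subseteq> kernel FH FT phi"
  unfolding NN_def
  by (rule group.generate_subgroup_incl[OF group_free_Abelian_group HRel_kernel group_hom.subgroup_kernel[OF phi_group_hom]])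

lemma gen_NN:
  assumes k: "k \<in> Char (-1) E m"
  shows "frag_of k - psi (phi (frag_of k)) \<in> NN"
proof -
  define r where "r = rk k"
  define x where "x = xk k"
  have rC: "r \<in> Char 1 E m" using rk_Char[OF k] by (simp add: r_def)
  have kk: "kpt r x = k" using kpt_xk[of k] by (simp add: r_def x_def)
  show ?thesis
  proof (cases "gk k")
    case True
    define t where "t = tau k"
    have t: "t \<in> Tset" using tau_T[OF k True] by (simp add: t_def)
    have g: "good r x" using True by (simp add: gk_def r_def x_def)
    have ft: "rep (fst t) = r" by (simp add: t_def tau_def rk_def r_def)
    have nt: "fst (snd t) = wt E m r x" by (simp add: t_def tau_def nk_def r_def x_def)
    have ct: "snd (snd t) = cls r (wt E m r x) x" by (simp add: t_def tau_def nk_def r_def x_def)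
    have "snd (snd t) = cls r (wt E m r x) (xt t)" using xt_prop(3)[OF t] ft nt by simp
    then have "xt t \<in> cls r (wt E m r x) x" using ct conn_refl by (simp add: cls_def)
    then have cx: "conn r (wt E m r x) x (xt t)" by (simp add: cls_def)
    have "frag_of (kpt r x) - frag_cmul (par x * par (xt t)) (frag_of (kpt r (xt t))) \<in> NN"
      by (rule chain_NN[OF rC g cx])
    moreover have "psi (phi (frag_of k)) = frag_cmul (par x * par (xt t)) (frag_of (kpt r (xt t)))"
      using True ft by (simp add: phi_def psi_def frag_extend_cmul t_def[symmetric] x_def kt_def)
    ultimately show ?thesis using kk by simp
  next
    case False
    then obtain y where "conn r (wt E m r x) x y" "wt E m r y < wt E m r x"
      unfolding gk_def good_def r_def[symmetric] x_def[symmetric] by force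
    then have "frag_of (kpt r x) \<in> NN" using dead_NN[OF rC] by blast
    then show ?thesis using False kk by (simp add: phi_def psi_def)
  qed
qed

lemma kernel_NN: "kernel FH FT phi \<subseteq> NN"
proof
  fix c assume c: "c \<in> kernel FH FT phi"
  then have kc: "Poly_Mapping.keys c \<subseteq> Char (-1) E m" and p0: "phi c = 0" by (auto simp: kernel_def)
  have "c - psi (phi c) \<in> NN"
  proof (rule free_Abelian_group_induct[of c "Char (-1) E m" "\<lambda>c. c - psi (phi c) \<in> NN"])
    show "Poly_Mapping.keys c \<subseteq> Char (- 1) E m" by (rule kc)
    show "0 - psi (phi 0) \<in> NN" using FA_sub_0[OF NN_sub] by (simp add: phi_def psi_def)
  next
    fix x y assume "x - psi (phi x) \<in> NN" "y - psi (phi y) \<in> NN"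
    then have "(x - psi (phi x)) - (y - psi (phi y)) \<in> NN" by (rule FA_sub_diff[OF NN_sub])
    moreover have "x - y - psi (phi (x - y)) = (x - psi (phi x)) - (y - psi (phi y))"
      by (simp add: phi_def psi_def frag_extend_diff algebra_simps)
    ultimately show "x - y - psi (phi (x - y)) \<in> NN" by metis
  next
    fix k assume "k \<in> Char (-1) E m" then show "frag_of k - psi (phi (frag_of k)) \<in> NN" by (rule gen_NN)
  qed
  then show "c \<in> NN" using p0 by (simp add: psi_def)
qed

lemma H_iso: "HGroup E m \<cong> FT"
proof -
  have "kernel FH FT phi = NN" using kernel_NN NN_kernel by blast
  then have "HGroup E m = FH Mod kernel FH FT phi" by (simp add: HGroup_def NN_def)
  then show ?thesis using group_hom.FactGroup_iso[OF phi_group_hom phi_onto] by simp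
qed

end


context PF
begin

definition qf :: "real^'v \<Rightarrow> real" where
  "qf y = pair 1 E m (\<lambda>v. y $ v) (\<lambda>v. y $ v)"

lemma cont_if0: "continuous_on S f \<Longrightarrow> continuous_on S (\<lambda>x. if P then f x else (0::real))"
  by (cases P) auto

lemma qf_cont: "continuous_on S qf"
  unfolding qf_def pair_def
  by (intro continuous_intros cont_if0 continuous_on_component continuous_on_id)

lemma qf_scale: "qf (c *\<^sub>R y) = c\<^sup>2 * qf y"
  unfolding qf_def pair_def
  by (simp add: sum_distrib_left algebra_simps power2_eq_square if_distrib cong: if_cong)

lemma qf_neg: "y \<noteq> 0 \<Longrightarrow> qf y < 0"
proof -
  assume "y \<noteq> 0"
  then have "(\<lambda>v. y $ v) \<noteq> (\<lambda>_. 0)" by (metis vec_eq_iff zero_index)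
  then show "qf y < 0" using negdef unfolding neg_definite_def qf_def by blast
qed

lemma qf_bound: "\<exists>c>0. \<forall>y. qf y \<le> - c * (norm y)\<^sup>2"
proof -
  have "compact (sphere (0::real^'v) 1)" by simp
  moreover have "sphere (0::real^'v) 1 \<noteq> {}" by simp
  ultimately obtain y0 where y0: "y0 \<in> sphere 0 1" and mx: "\<forall>y\<in>sphere 0 1. qf y \<le> qf y0"
    using continuous_attains_sup[OF _ _ qf_cont] by blast
  have "y0 \<noteq> 0" using y0 by auto
  then have neg: "qf y0 < 0" by (rule qf_neg)
  have "qf y \<le> qf y0 * (norm y)\<^sup>2" for y
  proof (cases "y = 0")
    case True
    have "qf 0 = 0" using qf_scale[of 0 0] by simp
    then show ?thesis using True by simp
  next
    case False
    define u where "u = (1 / norm y) *\<^sub>R y"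
    have "u \<in> sphere 0 1" using False by (simp add: u_def)
    then have "qf u \<le> qf y0" using mx by blast
    moreover have "y = norm y *\<^sub>R u" using False by (simp add: u_def)
    then have "qf y = (norm y)\<^sup>2 * qf u" by (metis qf_scale)
    ultimately show ?thesis using mult_right_mono[of "qf u" "qf y0" "(norm y)\<^sup>2"] by (simp add: mult.commute)
  qed
  then show ?thesis using neg by (intro exI[of _ "- qf y0"]) auto
qed

definition vec_of :: "('v \<Rightarrow> int) \<Rightarrow> real^'v" where
  "vec_of x = (\<chi> v. real_of_int (x v))"

lemma qf_vec: "qf (vec_of x) = real_of_int (pair 1 E m x x)"
proof -
  have "(\<lambda>v. vec_of x $ v) = (\<lambda>v. real_of_int (x v))" by (simp add: vec_of_def)
  then show ?thesis unfolding qf_def using pair_of_int[of 1 E m x x, where 'a=real] by simp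
qed

lemma finite_box: "finite {x :: 'v \<Rightarrow> int. \<forall>v. \<bar>x v\<bar> \<le> b}"
proof -
  have e: "\<bar>x v\<bar> \<le> b \<longleftrightarrow> x v \<in> {-b..b}" for x :: "'v \<Rightarrow> int" and v by (auto simp: abs_le_iff)
  have "{x :: 'v \<Rightarrow> int. \<forall>v. \<bar>x v\<bar> \<le> b} = PiE UNIV (\<lambda>_. {-b..b})"
    unfolding e by (auto simp: PiE_def Pi_def)
  then show ?thesis by (simp add: finite_PiE)
qed

lemma finite_below:
  assumes r: "r \<in> Char 1 E m"
  shows "finite {x. wt E m r x \<le> n}"
proof -
  obtain c where c: "c > 0" "\<forall>y. qf y \<le> - c * (norm y)\<^sup>2" using qf_bound by blast
  define R where "R = (\<Sum>v\<in>UNIV. \<bar>real_of_int (r v)\<bar>)"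
  define B where "B = (\<bar>2 * real_of_int n\<bar> + R) / c + 1"
  have bnd: "\<bar>x v\<bar> \<le> \<lceil>B\<rceil>" if x: "wt E m r x \<le> n" for x v
  proof -
    define y where "y = vec_of x"
    have "2 * wt E m r x = - (pair 1 E m x x + evalk r x)" by (rule wt2[OF r])
    then have "- real_of_int (pair 1 E m x x) \<le> 2 * real_of_int n + real_of_int (evalk r x)"
      using x by linarith
    moreover have "real_of_int (pair 1 E m x x) \<le> - c * (norm y)\<^sup>2" using c(2)[rule_format, of y] qf_vec[of x] by (simp add: y_def)
    moreover have "real_of_int (evalk r x) \<le> R * norm y"
    proof -
      have "real_of_int (evalk r x) = (\<Sum>v\<in>UNIV. real_of_int (r v) * y $ v)"
        by (simp add: evalk_def y_def vec_of_def)
      also have "\<dots> \<le> (\<Sum>v\<in>UNIV. \<bar>real_of_int (r v)\<bar> * norm y)"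
      proof (rule sum_mono)
        fix v
        have "real_of_int (r v) * y $ v \<le> \<bar>real_of_int (r v)\<bar> * \<bar>y $ v\<bar>" by (metis abs_ge_self abs_mult)
        also have "\<dots> \<le> \<bar>real_of_int (r v)\<bar> * norm y" by (simp add: component_le_norm_cart mult_left_mono)
        finally show "real_of_int (r v) * y $ v \<le> \<bar>real_of_int (r v)\<bar> * norm y" .
      qed
      also have "\<dots> = R * norm y" by (simp add: R_def sum_distrib_right)
      finally show ?thesis .
    qed
    ultimately have q: "c * (norm y)\<^sup>2 \<le> \<bar>2 * real_of_int n\<bar> + R * norm y" by linarith
    have R0: "R \<ge> 0" by (simp add: R_def sum_nonneg)
    have "norm y \<le> B"
    proof (cases "norm y \<le> 1")
      case True
      have "0 \<le> (\<bar>2 * real_of_int n\<bar> + R) / c" using R0 c(1) by simp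
      then show ?thesis using True by (simp add: B_def)
    next
      case False
      then have "c * (norm y)\<^sup>2 \<le> (\<bar>2 * real_of_int n\<bar> + R) * norm y"
      proof -
        have "\<bar>2 * real_of_int n\<bar> * 1 \<le> \<bar>2 * real_of_int n\<bar> * norm y"
          by (rule mult_left_mono) (use False in auto)
        then show ?thesis using q by (simp add: distrib_right)
      qed
      then have "(c * norm y) * norm y \<le> (\<bar>2 * real_of_int n\<bar> + R) * norm y" by (simp add: power2_eq_square mult.assoc)
      moreover have "y \<noteq> 0" using False by auto
      ultimately have "c * norm y \<le> \<bar>2 * real_of_int n\<bar> + R" by (simp add: mult_le_cancel_right)
      then have "norm y \<le> (\<bar>2 * real_of_int n\<bar> + R) / c" using c(1) by (simp add: field_simps)
      then show ?thesis by (simp add: B_def)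
    qed
    moreover have "\<bar>real_of_int (x v)\<bar> \<le> norm y"
      using component_le_norm_cart[of y v] by (simp add: y_def vec_of_def)
    ultimately have "real_of_int \<bar>x v\<bar> \<le> B" by simp
    then show ?thesis by linarith
  qed
  show ?thesis by (rule finite_subset[OF _ finite_box[of "\<lceil>B\<rceil>"]]) (use bnd in auto)
qed

end


context PF
begin

definition fl :: "real^'v \<Rightarrow> ('v \<Rightarrow> int)" where "fl p = (\<lambda>v. \<lfloor>p $ v\<rfloor>)"

definition vj :: "('v \<Rightarrow> int) \<Rightarrow> 'v set \<Rightarrow> ('v \<Rightarrow> int)" where
  "vj a J = (\<lambda>v. a v + (if v \<in> J then 1 else 0))"

lemma cube_verts_vj: "cube_verts a I = vj a ` Pow I"
  by (auto simp: cube_verts_def vj_def)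

lemma cube_verts_fin: fixes a :: "'v \<Rightarrow> int" shows "finite (cube_verts a I)" by (simp add: cube_verts_vj)
lemma cube_verts_a: fixes a :: "'v \<Rightarrow> int" shows "a \<in> cube_verts a I"
  unfolding cube_verts_vj by (rule image_eqI[of _ _ "{}"]) (auto simp: vj_def)

lemma cube_wt_le: "cube_wt E m r a I \<le> n \<longleftrightarrow> (\<forall>y\<in>cube_verts a I. wt E m r y \<le> n)"
proof -
  have "finite (cube_verts a I)" by (rule cube_verts_fin)
  moreover have "cube_verts a I \<noteq> {}" using cube_verts_a[of a I] by blast
  ultimately show ?thesis unfolding cube_wt_def by (simp add: Max_le_iff)
qed

lemma Sset_iff: "p \<in> Sset E m r n \<longleftrightarrow> (\<exists>a I. cube_wt E m r a I \<le> n \<and> p \<in> cube_pts a I)"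
  unfolding Sset_def by blast

lemma fl_vert: assumes "p \<in> cube_pts a I" shows "fl p \<in> cube_verts a I"
proof -
  define J where "J = {v\<in>I. \<lfloor>p $ v\<rfloor> = a v + 1}"
  have "fl p = vj a J"
  proof
    fix v
    show "fl p v = vj a J v"
    proof (cases "v \<in> I")
      case True
      then have "of_int (a v) \<le> p $ v" "p $ v \<le> of_int (a v) + 1" using assms by (auto simp: cube_pts_def split: if_splits)
      then have "\<lfloor>p $ v\<rfloor> = a v \<or> \<lfloor>p $ v\<rfloor> = a v + 1" by linarith
      then show ?thesis using True by (auto simp: fl_def vj_def J_def)
    next
      case False
      then have "p $ v = of_int (a v)" using assms by (auto simp: cube_pts_def split: if_splits)
      then show ?thesis using False by (auto simp: fl_def vj_def J_def)
    qed
  qed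
  moreover have "J \<subseteq> I" by (auto simp: J_def)
  ultimately show ?thesis unfolding cube_verts_vj by blast
qed

lemma vert_pt: fixes a :: "'v \<Rightarrow> int" shows "y \<in> cube_verts a I \<Longrightarrow> vec_of y \<in> cube_pts a I"
  unfolding cube_verts_vj by (auto simp: cube_pts_def vec_of_def vj_def)

lemma vj_insert: "j \<notin> J \<Longrightarrow> vj a (insert j J) = xp (vj a J) j"
  by (auto simp: vj_def xp_def basis_def fun_eq_iff)

lemma vert_conn:
  assumes w: "cube_wt E m r a I \<le> n" and y: "y \<in> cube_verts a I"
  shows "conn r n a y"
proof -
  obtain J where J: "J \<subseteq> I" "y = vj a J" using y unfolding cube_verts_vj by blast
  have "conn r n a (vj a J)" if "J \<subseteq> I" for J
  proof -
    have "finite J" by simp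
    then show ?thesis using that
    proof (induction J rule: finite_induct)
      case empty
      have "vj a {} = a" by (simp add: vj_def)
      then show ?case by (simp add: conn_refl)
    next
      case (insert j J)
      have v1: "vj a J \<in> cube_verts a I" "vj a (insert j J) \<in> cube_verts a I"
        using insert.prems unfolding cube_verts_vj by auto
      have "stp r n (vj a J) (vj a (insert j J))"
        unfolding stp_def adj_def vj_insert[OF insert.hyps(2)]
        using v1 w cube_wt_le vj_insert[OF insert.hyps(2)] by auto
      then show ?case using insert conn_def by (metis insert_subset rtranclp.rtrancl_into_rtrancl)
    qed
  qed
  then show ?thesis using J by simp
qed

lemma cube_cbox: fixes a :: "'v \<Rightarrow> int" shows "cube_pts a I = cbox (vec_of a) (vec_of (vj a I))"
  by (auto simp: cube_pts_def mem_box_cart vec_of_def vj_def split: if_splits)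

lemma cube_sub: "cube_wt E m r a I \<le> n \<Longrightarrow> cube_pts a I \<subseteq> Sset E m r n"
  using Sset_iff by blast

lemma cube_pc:
  assumes w: "cube_wt E m r a I \<le> n" and p: "p \<in> cube_pts a I" and q: "q \<in> cube_pts a I"
  shows "path_component (Sset E m r n) p q"
proof -
  have "path_connected (cube_pts a I)" unfolding cube_cbox by (rule convex_imp_path_connected) (rule convex_box)
  then have "path_component (cube_pts a I) p q" using p q path_connected_component by blast
  then show ?thesis by (rule path_component_of_subset[OF cube_sub[OF w]])
qed

lemma pc_fl: "p \<in> Sset E m r n \<Longrightarrow> path_component (Sset E m r n) p (vec_of (fl p))"
  unfolding Sset_iff using cube_pc fl_vert vert_pt by blast

lemma fl_wt: "p \<in> Sset E m r n \<Longrightarrow> wt E m r (fl p) \<le> n"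
  unfolding Sset_iff using fl_vert cube_wt_le by blast

lemma vec_in_S: "wt E m r x \<le> n \<Longrightarrow> vec_of x \<in> Sset E m r n"
proof -
  assume w: "wt E m r x \<le> n"
  have "cube_verts x {} = {x}" by (auto simp: cube_verts_def)
  then have "cube_wt E m r x {} \<le> n" using w by (simp add: cube_wt_le)
  moreover have "vec_of x \<in> cube_pts x {}" using vert_pt cube_verts_a by blast
  ultimately show ?thesis unfolding Sset_iff by blast
qed

lemma fl_vec [simp]: "fl (vec_of x) = x" by (simp add: fl_def vec_of_def)

lemma cube_edge: fixes x :: "'v \<Rightarrow> int" shows "cube_verts x {v} = {x, xp x v}"
proof -
  have "Pow {v} = {{}, {v}}" by auto
  moreover have "vj x {} = x" "vj x {v} = xp x v" by (auto simp: vj_def xp_def basis_def fun_eq_iff)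
  ultimately show ?thesis unfolding cube_verts_vj by simp
qed

lemma conn_pc:
  assumes c: "conn r n x y" and w: "wt E m r x \<le> n"
  shows "path_component (Sset E m r n) (vec_of x) (vec_of y)"
  using c unfolding conn_def
proof (induction rule: rtranclp_induct)
  case base
  then show ?case using vec_in_S[OF w] by (simp add: path_component_refl)
next
  case (step y z)
  have "path_component (Sset E m r n) (vec_of y) (vec_of z)"
  proof -
    from step(2) obtain v where wy: "wt E m r y \<le> n" and wz: "wt E m r z \<le> n" and e: "z = xp y v \<or> y = xp z v"
      unfolding stp_def adj_def by blast
    from e show ?thesis
    proof
      assume z: "z = xp y v"
      have "cube_wt E m r y {v} \<le> n" using wy wz z by (simp add: cube_wt_le cube_edge)
      moreover have "vec_of y \<in> cube_pts y {v}" "vec_of z \<in> cube_pts y {v}" using vert_pt cube_edge z by auto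
      ultimately show ?thesis using cube_pc by blast
    next
      assume y: "y = xp z v"
      have "cube_wt E m r z {v} \<le> n" using wy wz y by (simp add: cube_wt_le cube_edge)
      moreover have "vec_of y \<in> cube_pts z {v}" "vec_of z \<in> cube_pts z {v}" using vert_pt cube_edge y by auto
      ultimately show ?thesis using cube_pc by blast
    qed
  qed
  then show ?case using step(3) path_component_trans by blast
qed

lemma closed_cube: fixes a :: "'v \<Rightarrow> int" shows "closed (cube_pts a I)" unfolding cube_cbox by (rule closed_cbox)

lemma finite_cubes: "r \<in> Char 1 E m \<Longrightarrow> finite {(a, I). cube_wt E m r a I \<le> n}"
proof -
  assume r: "r \<in> Char 1 E m"
  have "{(a, I). cube_wt E m r a I \<le> n} \<subseteq> {a. wt E m r a \<le> n} \<times> UNIV"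
    using cube_wt_le cube_verts_a by auto
  moreover have "finite ({a. wt E m r a \<le> n} \<times> (UNIV :: 'v set set))"
    using finite_below[OF r, of n] by simp
  ultimately show ?thesis by (rule finite_subset)
qed

lemma closed_union_cubes:
  assumes r: "r \<in> Char 1 E m"
  shows "closed (\<Union> {cube_pts a I | a I. cube_wt E m r a I \<le> n \<and> P a})"
proof -
  have "{cube_pts a I | a I. cube_wt E m r a I \<le> n \<and> P a} \<subseteq> (\<lambda>(a, I). cube_pts a I) ` {(a, I). cube_wt E m r a I \<le> n}"
    by auto
  then have "finite {cube_pts a I | a I. cube_wt E m r a I \<le> n \<and> P a}"
    using finite_cubes[OF r] finite_subset by blast
  then show ?thesis by (rule closed_Union) (auto intro: closed_cube)
qed

lemma pc_conn:
  assumes r: "r \<in> Char 1 E m" and pc: "path_component (Sset E m r n) p q"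
  shows "conn r n (fl p) (fl q)"
proof -
  define K where "K = {y. conn r n (fl p) y}"
  define A where "A = \<Union> {cube_pts a I | a I. cube_wt E m r a I \<le> n \<and> a \<in> K}"
  define B where "B = \<Union> {cube_pts a I | a I. cube_wt E m r a I \<le> n \<and> a \<notin> K}"
  have cA: "closed A" unfolding A_def by (rule closed_union_cubes[OF r])
  have cB: "closed B" unfolding B_def by (rule closed_union_cubes[OF r])
  have SAB: "Sset E m r n \<subseteq> A \<union> B"
  proof
    fix z assume "z \<in> Sset E m r n"
    then obtain a I where aI: "cube_wt E m r a I \<le> n" "z \<in> cube_pts a I" using Sset_iff by blast
    show "z \<in> A \<union> B"
    proof (cases "a \<in> K")
      case True then have "z \<in> A" unfolding A_def using aI by blast
      then show ?thesis by blast
    next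
      case False then have "z \<in> B" unfolding B_def using aI by blast
      then show ?thesis by blast
    qed
  qed
  have memA: "z \<in> A \<Longrightarrow> fl z \<in> K" for z
  proof -
    assume "z \<in> A"
    then obtain a I where "cube_wt E m r a I \<le> n" "a \<in> K" "z \<in> cube_pts a I" unfolding A_def by blast
    note h = this
    have "conn r n a (fl z)" using vert_conn[OF h(1) fl_vert[OF h(3)]] .
    moreover have "conn r n (fl p) a" using h(2) by (simp add: K_def)
    ultimately show "fl z \<in> K" using conn_trans unfolding K_def by blast
  qed
  have memB: "z \<in> B \<Longrightarrow> fl z \<notin> K" for z
  proof -
    assume "z \<in> B"
    then obtain a I where "cube_wt E m r a I \<le> n" "a \<notin> K" "z \<in> cube_pts a I" unfolding B_def by blast
    note h = this
    have "conn r n (fl z) a" using conn_sym[OF vert_conn[OF h(1) fl_vert[OF h(3)]]] .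
    then show "fl z \<notin> K" using h(2) conn_trans unfolding K_def by blast
  qed
  have dis: "A \<inter> B = {}" using memA memB by blast
  obtain g where g: "path g" "path_image g \<subseteq> Sset E m r n" "pathstart g = p" "pathfinish g = q"
    using pc unfolding path_component_def by blast
  have pi: "p \<in> path_image g" "q \<in> path_image g" using g by auto
  have "p \<in> Sset E m r n" using g pi by blast
  then have "p \<in> A \<or> p \<in> B" using SAB by blast
  moreover have "fl p \<in> K" by (simp add: K_def conn_refl)
  ultimately have pA: "p \<in> A" using memB by blast
  have conn_img: "connected (path_image g)" using g(1) by (rule connected_path_image)
  have "\<not> (B \<inter> path_image g \<noteq> {})"
  proof
    assume "B \<inter> path_image g \<noteq> {}"
    moreover have "A \<inter> path_image g \<noteq> {}" using pA pi by blast
    moreover have "path_image g \<subseteq> A \<union> B" using g(2) SAB by blast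
    ultimately show False using conn_img cA cB dis unfolding connected_closed by auto
  qed
  then have "q \<in> A" using pi g(2) SAB by blast
  then show ?thesis using memA K_def by blast
qed

end


context PF
begin

abbreviation "HP \<equiv> HPlus E m"

lemma HP_carrier: "F \<in> carrier HP \<longleftrightarrow> (\<forall>Ob n. F (Ob, n) \<in> H0 (Sset E m (rep Ob) n))
     \<and> (\<forall>Ob n. Ob \<notin> Orbits E m \<longrightarrow> F (Ob, n) = (\<lambda>_. 0)) \<and> finite {i. F i \<noteq> (\<lambda>_. 0)}"
  by (simp add: HPlus_def)
lemma HP_mult: "F \<otimes>\<^bsub>HP\<^esub> G = (\<lambda>i p. F i p + G i p)" by (simp add: HPlus_def)
lemma HP_one: "\<one>\<^bsub>HP\<^esub> = (\<lambda>i p. 0)" by (simp add: HPlus_def)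

lemma H0_add: "f \<in> H0 S \<Longrightarrow> g \<in> H0 S \<Longrightarrow> (\<lambda>p. f p + g p) \<in> H0 S"
  by (simp add: H0_def)
lemma H0_neg: "f \<in> H0 S \<Longrightarrow> (\<lambda>p. - f p) \<in> H0 S"
  by (simp add: H0_def)
lemma H0_0: "(\<lambda>p. 0) \<in> H0 S"
  by (simp add: H0_def)

lemma HP_add_closed:
  assumes "F \<in> carrier HP" "G \<in> carrier HP" shows "(\<lambda>i p. F i p + G i p) \<in> carrier HP"
proof -
  have "{i. (\<lambda>p. F i p + G i p) \<noteq> (\<lambda>_. 0)} \<subseteq> {i. F i \<noteq> (\<lambda>_. 0)} \<union> {i. G i \<noteq> (\<lambda>_. 0)}" by auto
  then have "finite {i. (\<lambda>p. F i p + G i p) \<noteq> (\<lambda>_. 0)}" using assms unfolding HP_carrier by (meson finite_Un finite_subset)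
  then show ?thesis using assms unfolding HP_carrier by (auto intro: H0_add)
qed

lemma HP_neg_closed:
  assumes "F \<in> carrier HP" shows "(\<lambda>i p. - F i p) \<in> carrier HP"
proof -
  have "{i. (\<lambda>p. - F i p) \<noteq> (\<lambda>_. 0)} = {i. F i \<noteq> (\<lambda>_. 0)}" by (auto simp: fun_eq_iff)
  then show ?thesis using assms unfolding HP_carrier by (auto intro: H0_neg)
qed

lemma HP_group: "group HP"
proof (rule groupI)
  show "\<one>\<^bsub>HP\<^esub> \<in> carrier HP" unfolding HP_one HP_carrier by (auto simp: H0_0)
next
  fix x y assume "x \<in> carrier HP" "y \<in> carrier HP"
  then show "x \<otimes>\<^bsub>HP\<^esub> y \<in> carrier HP" unfolding HP_mult by (rule HP_add_closed)
next
  fix x y z show "x \<otimes>\<^bsub>HP\<^esub> y \<otimes>\<^bsub>HP\<^esub> z = x \<otimes>\<^bsub>HP\<^esub> (y \<otimes>\<^bsub>HP\<^esub> z)"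
    unfolding HP_mult by (simp add: algebra_simps)
next
  fix x show "\<one>\<^bsub>HP\<^esub> \<otimes>\<^bsub>HP\<^esub> x = x" unfolding HP_mult HP_one by simp
next
  fix x assume "x \<in> carrier HP"
  then show "\<exists>y\<in>carrier HP. y \<otimes>\<^bsub>HP\<^esub> x = \<one>\<^bsub>HP\<^esub>"
    using HP_neg_closed[of x] unfolding HP_mult HP_one by (intro bexI[of _ "\<lambda>i p. - x i p"]) auto
qed

lemma HP_inv: "F \<in> carrier HP \<Longrightarrow> inv\<^bsub>HP\<^esub> F = (\<lambda>i p. - F i p)"
  using group.inv_equality[OF HP_group, of "\<lambda>i p. - F i p" F] HP_neg_closed[of F]
  unfolding HP_mult HP_one by simp

definition KK where "KK = kernel HP HP (Umap E m)"

lemma KK_iff: "F \<in> KK \<longleftrightarrow> F \<in> carrier HP \<and> Umap E m F = (\<lambda>i p. 0)"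
  by (simp add: KK_def kernel_def HP_one)

lemma Umap_add: "Umap E m (\<lambda>i p. F i p + G i p) = (\<lambda>i p. Umap E m F i p + Umap E m G i p)"
  by (auto simp: Umap_def fun_eq_iff)
lemma Umap_neg: "Umap E m (\<lambda>i p. - F i p) = (\<lambda>i p. - Umap E m F i p)"
  by (auto simp: Umap_def fun_eq_iff)

lemma KK_subgroup: "subgroup KK HP"
proof (rule group.subgroupI[OF HP_group])
  show "KK \<subseteq> carrier HP" using KK_iff by blast
  have "\<one>\<^bsub>HP\<^esub> \<in> KK" unfolding KK_iff HP_one
    using monoid.one_closed[OF group.is_monoid[OF HP_group]] by (auto simp: HP_one Umap_def fun_eq_iff)
  then show "KK \<noteq> {}" by blast
next
  fix a assume "a \<in> KK"
  then have a: "a \<in> carrier HP" "Umap E m a = (\<lambda>i p. 0)" unfolding KK_iff by auto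
  have "Umap E m (\<lambda>i p. - a i p) = (\<lambda>i p. 0)" unfolding Umap_neg a(2) by simp
  then show "inv\<^bsub>HP\<^esub> a \<in> KK" unfolding KK_iff HP_inv[OF a(1)] using HP_neg_closed[OF a(1)] by simp
next
  fix a b assume "a \<in> KK" "b \<in> KK"
  then show "a \<otimes>\<^bsub>HP\<^esub> b \<in> KK" unfolding KK_iff HP_mult using HP_add_closed Umap_add by (auto simp: fun_eq_iff)
qed

lemma KerU_carrier: "carrier (KerU E m) = KK"
  unfolding KerU_def KK_def[symmetric] using subgroup.carrier_subgroup_generated_subgroup[OF KK_subgroup] .

lemma KerU_mult: "x \<otimes>\<^bsub>KerU E m\<^esub> y = (\<lambda>i p. x i p + y i p)"
  by (simp add: KerU_def subgroup_generated_def HP_mult)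

end


context PF
begin

definition ind :: "(('v \<Rightarrow> int) set \<times> int \<times> ('v \<Rightarrow> int) set) \<Rightarrow> (('v \<Rightarrow> int) set \<times> int) \<Rightarrow> real^'v \<Rightarrow> int" where
  "ind t = (\<lambda>i p. if i = (fst t, fst (snd t)) \<and> p \<in> Sset E m (rep (fst t)) (fst (snd t)) \<and> fl p \<in> snd (snd t) then 1 else 0)"

lemma T_C:
  assumes t: "t \<in> Tset" and y: "y \<in> snd (snd t)"
  shows "conn (rep (fst t)) (fst (snd t)) (xt t) y" "wt E m (rep (fst t)) y = fst (snd t)"
proof -
  show c: "conn (rep (fst t)) (fst (snd t)) (xt t) y" using y xt_prop(3)[OF t] by (simp add: cls_def)
  show "wt E m (rep (fst t)) y = fst (snd t)"
    using good_wt[OF xt_prop(1)[OF t]] c xt_prop(2)[OF t] by simp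
qed

lemma T_closed:
  assumes t: "t \<in> Tset" and y: "y \<in> snd (snd t)" and c: "conn (rep (fst t)) (fst (snd t)) y z"
  shows "z \<in> snd (snd t)"
  using T_C(1)[OF t y] c conn_trans xt_prop(3)[OF t] by (simp add: cls_def)

lemma T_unique:
  assumes t: "t \<in> Tset" and t': "t' \<in> Tset" and e: "fst t = fst t'" "fst (snd t) = fst (snd t')"
    and y: "y \<in> snd (snd t)" "y \<in> snd (snd t')"
  shows "t = t'"
proof -
  have "snd (snd t) = snd (snd t')"
  proof
    show "snd (snd t) \<subseteq> snd (snd t')"
    proof
      fix z assume "z \<in> snd (snd t)"
      then have "conn (rep (fst t)) (fst (snd t)) y z"
        using T_C(1)[OF t y(1)] T_C(1)[OF t] conn_sym conn_trans by blast
      then show "z \<in> snd (snd t')" using T_closed[OF t' y(2)] e by simp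
    qed
  next
    show "snd (snd t') \<subseteq> snd (snd t)"
    proof
      fix z assume "z \<in> snd (snd t')"
      then have "conn (rep (fst t')) (fst (snd t')) y z"
        using T_C(1)[OF t' y(2)] T_C(1)[OF t'] conn_sym conn_trans by blast
      then show "z \<in> snd (snd t)" using T_closed[OF t y(1)] e by simp
    qed
  qed
  then show ?thesis using e by (simp add: prod_eq_iff)
qed

lemma ind_off: "p \<notin> Sset E m (rep (fst i)) (snd i) \<Longrightarrow> ind t i p = 0"
  by (auto simp: ind_def)

lemma ind_orb: "t \<in> Tset \<Longrightarrow> fst i \<notin> Orbits E m \<Longrightarrow> ind t i p = 0"
  using xt_prop(4)[of t] by (auto simp: ind_def)

lemma ind_pc:
  assumes t: "t \<in> Tset" and pc: "path_component (Sset E m (rep (fst i)) (snd i)) p q"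
  shows "ind t i p = ind t i q"
proof (cases "i = (fst t, fst (snd t))")
  case True
  have r: "rep (fst t) \<in> Char 1 E m" using rep_Orbit_Char xt_prop(4)[OF t] by blast
  have pc': "path_component (Sset E m (rep (fst t)) (fst (snd t))) p q" using pc True by simp
  have c: "conn (rep (fst t)) (fst (snd t)) (fl p) (fl q)" by (rule pc_conn[OF r pc'])
  have "fl p \<in> snd (snd t) \<longleftrightarrow> fl q \<in> snd (snd t)"
    using T_closed[OF t _ c] T_closed[OF t _ conn_sym[OF c]] by blast
  moreover have "p \<in> Sset E m (rep (fst t)) (fst (snd t))" "q \<in> Sset E m (rep (fst t)) (fst (snd t))"
    using path_component_mem[OF pc'] by auto
  ultimately show ?thesis by (simp add: ind_def)
next
  case False then show ?thesis by (simp add: ind_def)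
qed

lemma ind_U:
  assumes t: "t \<in> Tset" and p: "p \<in> Sset E m (rep Ob) n"
  shows "ind t (Ob, n + 1) p = 0"
proof (rule ccontr)
  assume "ind t (Ob, n + 1) p \<noteq> 0"
  then have e: "Ob = fst t" "n + 1 = fst (snd t)" and y: "fl p \<in> snd (snd t)" by (auto simp: ind_def split: if_splits)
  have "wt E m (rep Ob) (fl p) \<le> n" by (rule fl_wt[OF p])
  moreover have "wt E m (rep Ob) (fl p) = n + 1" using T_C(2)[OF t y] e by simp
  ultimately show False by simp
qed

definition gmap :: "((('v \<Rightarrow> int) set \<times> int \<times> ('v \<Rightarrow> int) set) \<Rightarrow>\<^sub>0 int) \<Rightarrow> (('v \<Rightarrow> int) set \<times> int \<Rightarrow> real^'v \<Rightarrow> int)" where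
  "gmap a = (\<lambda>i p. \<Sum>t\<in>Poly_Mapping.keys a. poly_mapping.lookup a t * ind t i p)"

lemma gmap_sup:
  assumes "finite K" "Poly_Mapping.keys a \<subseteq> K"
  shows "gmap a i p = (\<Sum>t\<in>K. poly_mapping.lookup a t * ind t i p)"
  unfolding gmap_def
  by (rule sum.mono_neutral_left) (use assms in \<open>auto simp: in_keys_iff\<close>)

lemma gmap_KK:
  assumes a: "Poly_Mapping.keys a \<subseteq> Tset"
  shows "gmap a \<in> KK"
proof -
  have H: "gmap a (Ob, n) \<in> H0 (Sset E m (rep Ob) n)" for Ob n
  proof -
    have "gmap a (Ob, n) p = 0" if "p \<notin> Sset E m (rep Ob) n" for p
      unfolding gmap_def using ind_off[of p "(Ob, n)"] that by simp
    moreover have "gmap a (Ob, n) p = gmap a (Ob, n) q" if "path_component (Sset E m (rep Ob) n) p q" for p q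
      unfolding gmap_def using ind_pc[of _ "(Ob, n)" p q] that a by (intro sum.cong) auto
    ultimately show ?thesis by (simp add: H0_def)
  qed
  have O: "gmap a (Ob, n) = (\<lambda>_. 0)" if "Ob \<notin> Orbits E m" for Ob n
    unfolding gmap_def using ind_orb[of _ "(Ob, n)"] that a by (auto simp: fun_eq_iff intro!: sum.neutral)
  have "{i. gmap a i \<noteq> (\<lambda>_. 0)} \<subseteq> (\<lambda>t. (fst t, fst (snd t))) ` Poly_Mapping.keys a"
  proof
    fix i assume i: "i \<in> {i. gmap a i \<noteq> (\<lambda>_. 0)}"
    show "i \<in> (\<lambda>t. (fst t, fst (snd t))) ` Poly_Mapping.keys a"
    proof (rule ccontr)
      assume "i \<notin> (\<lambda>t. (fst t, fst (snd t))) ` Poly_Mapping.keys a"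
      then have "\<forall>t\<in>Poly_Mapping.keys a. \<forall>p. ind t i p = 0" by (force simp: ind_def)
      then have "gmap a i = (\<lambda>_. 0)" unfolding gmap_def by (auto simp: fun_eq_iff)
      then show False using i by simp
    qed
  qed
  then have F: "finite {i. gmap a i \<noteq> (\<lambda>_. 0)}" by (rule finite_subset) simp
  have U0: "Umap E m (gmap a) (Ob, n) p = 0" for Ob n p
  proof (cases "p \<in> Sset E m (rep Ob) n")
    case True
    have "(\<Sum>t\<in>Poly_Mapping.keys a. poly_mapping.lookup a t * ind t (Ob, n + 1) p) = 0"
      using ind_U[OF _ True] a by (intro sum.neutral) auto
    then show ?thesis unfolding Umap_def gmap_def using True by simp
  qed (simp add: Umap_def)
  have U: "Umap E m (gmap a) = (\<lambda>i p. 0)"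
    by (intro ext) (metis U0 surj_pair)
  show ?thesis unfolding KK_iff HP_carrier using H O F U by blast
qed

lemma ind_self:
  assumes t: "t \<in> Tset"
  shows "ind t (fst t, fst (snd t)) (vec_of (xt t)) = 1"
proof -
  have "vec_of (xt t) \<in> Sset E m (rep (fst t)) (fst (snd t))" using vec_in_S xt_prop(2)[OF t] by simp
  moreover have "xt t \<in> snd (snd t)" using xt_prop(3)[OF t] conn_refl by (simp add: cls_def)
  ultimately show ?thesis by (simp add: ind_def)
qed

lemma gmap_eval:
  assumes a: "Poly_Mapping.keys a \<subseteq> Tset" and t: "t \<in> Tset"
  shows "gmap a (fst t, fst (snd t)) (vec_of (xt t)) = poly_mapping.lookup a t"
proof -
  have "gmap a (fst t, fst (snd t)) (vec_of (xt t)) = (\<Sum>t'\<in>insert t (Poly_Mapping.keys a). poly_mapping.lookup a t' * ind t' (fst t, fst (snd t)) (vec_of (xt t)))"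
    by (rule gmap_sup) auto
  also have "\<dots> = (\<Sum>t'\<in>insert t (Poly_Mapping.keys a). if t' = t then poly_mapping.lookup a t else 0)"
  proof (rule sum.cong[OF refl])
    fix t' assume t': "t' \<in> insert t (Poly_Mapping.keys a)"
    then have t'T: "t' \<in> Tset" using a t by auto
    show "poly_mapping.lookup a t' * ind t' (fst t, fst (snd t)) (vec_of (xt t)) = (if t' = t then poly_mapping.lookup a t else 0)"
    proof (cases "t' = t")
      case True then show ?thesis using ind_self[OF t] by simp
    next
      case False
      have "ind t' (fst t, fst (snd t)) (vec_of (xt t)) = 0"
      proof (rule ccontr)
        assume "ind t' (fst t, fst (snd t)) (vec_of (xt t)) \<noteq> 0"
        then have e: "fst t = fst t'" "fst (snd t) = fst (snd t')" and y: "xt t \<in> snd (snd t')"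
          by (auto simp: ind_def split: if_splits)
        have "xt t \<in> snd (snd t)" using xt_prop(3)[OF t] conn_refl by (simp add: cls_def)
        then have "t = t'" using T_unique[OF t t'T e _ y] by blast
        then show False using False by simp
      qed
      then show ?thesis using False by simp
    qed
  qed
  also have "\<dots> = poly_mapping.lookup a t" by simp
  finally show ?thesis .
qed

lemma gmap_add: "gmap (a + b) = (\<lambda>i p. gmap a i p + gmap b i p)"
proof (intro ext)
  fix i p
  define K where "K = Poly_Mapping.keys a \<union> Poly_Mapping.keys b"
  have fK: "finite K" unfolding K_def by simp
  have kab: "Poly_Mapping.keys (a + b) \<subseteq> K" unfolding K_def by (rule keys_add)
  have ka: "Poly_Mapping.keys a \<subseteq> K" and kb: "Poly_Mapping.keys b \<subseteq> K" unfolding K_def by auto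
  have "gmap (a + b) i p = (\<Sum>t\<in>K. poly_mapping.lookup (a + b) t * ind t i p)"
    by (rule gmap_sup[OF fK kab])
  also have "\<dots> = (\<Sum>t\<in>K. poly_mapping.lookup a t * ind t i p) + (\<Sum>t\<in>K. poly_mapping.lookup b t * ind t i p)"
    by (simp add: lookup_add distrib_right sum.distrib)
  also have "\<dots> = gmap a i p + gmap b i p"
    using gmap_sup[OF fK ka, of i p] gmap_sup[OF fK kb, of i p] by simp
  finally show "gmap (a + b) i p = gmap a i p + gmap b i p" .
qed

lemma gmap_inj: "inj_on gmap (carrier FT)"
proof (rule inj_onI)
  fix a b assume a: "a \<in> carrier FT" and b: "b \<in> carrier FT" and e: "gmap a = gmap b"
  have ka: "Poly_Mapping.keys a \<subseteq> Tset" and kb: "Poly_Mapping.keys b \<subseteq> Tset" using a b by auto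
  show "a = b"
  proof (rule poly_mapping_eqI)
    fix t show "poly_mapping.lookup a t = poly_mapping.lookup b t"
    proof (cases "t \<in> Tset")
      case True then show ?thesis using gmap_eval[OF ka True] gmap_eval[OF kb True] e by simp
    next
      case False then have "t \<notin> Poly_Mapping.keys a" "t \<notin> Poly_Mapping.keys b" using ka kb by auto
      then show ?thesis by (simp add: in_keys_iff)
    qed
  qed
qed

end


context PF
begin

lemma F_const: "F \<in> carrier HP \<Longrightarrow> path_component (Sset E m (rep Ob) n) p q \<Longrightarrow> F (Ob, n) p = F (Ob, n) q"
  unfolding HP_carrier H0_def by blast
lemma F_off: "F \<in> carrier HP \<Longrightarrow> p \<notin> Sset E m (rep Ob) n \<Longrightarrow> F (Ob, n) p = 0"
  unfolding HP_carrier H0_def by blast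
lemma F_orb: assumes "F \<in> carrier HP" "Ob \<notin> Orbits E m" shows "F (Ob, n) p = 0"
proof -
  have "F (Ob, n) = (\<lambda>_. 0)" using assms unfolding HP_carrier by blast
  then show ?thesis by simp
qed

lemma gmap_onto:
  assumes F: "F \<in> KK"
  shows "\<exists>a\<in>carrier FT. gmap a = F"
proof -
  have FC: "F \<in> carrier HP" and FU: "Umap E m F = (\<lambda>i p. 0)" using F unfolding KK_iff by auto
  define cf where "cf t = (if t \<in> Tset then F (fst t, fst (snd t)) (vec_of (xt t)) else 0)" for t
  define SF where "SF = {i. F i \<noteq> (\<lambda>_. 0)}"
  have fSF: "finite SF" using FC unfolding HP_carrier SF_def by blast
  have SFO: "fst i \<in> Orbits E m" if "i \<in> SF" for i
  proof (rule ccontr)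
    assume nO: "fst i \<notin> Orbits E m"
    obtain Ob n where i: "i = (Ob, n)" by fastforce
    have "F (Ob, n) = (\<lambda>_. 0)" using F_orb[OF FC, of Ob n] nO i by auto
    then show False using that i by (simp add: SF_def)
  qed
  have fin: "finite {t. cf t \<noteq> 0}"
  proof (rule finite_subset)
    show "{t. cf t \<noteq> 0} \<subseteq> (\<Union>i\<in>SF. (\<lambda>x. (fst i, snd i, cls (rep (fst i)) (snd i) x)) ` {x. wt E m (rep (fst i)) x \<le> snd i})"
    proof
      fix t assume "t \<in> {t. cf t \<noteq> 0}"
      then have t: "t \<in> Tset" and nz: "F (fst t, fst (snd t)) (vec_of (xt t)) \<noteq> 0" by (auto simp: cf_def split: if_splits)
      have "(fst t, fst (snd t)) \<in> SF" using nz by (auto simp: SF_def)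
      moreover have "t = (fst t, fst (snd t), cls (rep (fst t)) (fst (snd t)) (xt t))"
        using xt_prop(3)[OF t] by (simp add: prod_eq_iff)
      moreover have "wt E m (rep (fst t)) (xt t) \<le> fst (snd t)" using xt_prop(2)[OF t] by simp
      ultimately show "t \<in> (\<Union>i\<in>SF. (\<lambda>x. (fst i, snd i, cls (rep (fst i)) (snd i) x)) ` {x. wt E m (rep (fst i)) x \<le> snd i})"
        by force
    qed
    show "finite (\<Union>i\<in>SF. (\<lambda>x. (fst i, snd i, cls (rep (fst i)) (snd i) x)) ` {x. wt E m (rep (fst i)) x \<le> snd i})"
      using fSF SFO rep_Orbit_Char finite_below by blast
  qed
  define a where "a = Abs_poly_mapping cf"
  have la: "poly_mapping.lookup a = cf" using fin by (simp add: a_def)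
  have ka: "Poly_Mapping.keys a \<subseteq> Tset" by (auto simp: in_keys_iff la cf_def split: if_splits)
  have "gmap a (Ob, n) p = F (Ob, n) p" for Ob n p
  proof (cases "Ob \<in> Orbits E m \<and> p \<in> Sset E m (rep Ob) n")
    case False
    then have "F (Ob, n) p = 0" using F_off[OF FC] F_orb[OF FC] by blast
    moreover have "gmap a (Ob, n) p = 0" unfolding gmap_def
      using False ka ind_off[of p "(Ob, n)"] ind_orb[of _ "(Ob, n)" p] by (intro sum.neutral) auto
    ultimately show ?thesis by simp
  next
    case True
    then have Ob: "Ob \<in> Orbits E m" and p: "p \<in> Sset E m (rep Ob) n" by auto
    define r where "r = rep Ob"
    have r: "r \<in> Char 1 E m" using rep_Orbit_Char[OF Ob] by (simp add: r_def)
    define y where "y = fl p"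
    have wy: "wt E m r y \<le> n" using fl_wt[OF p] by (simp add: y_def r_def)
    have pcy: "path_component (Sset E m r n) p (vec_of y)" using pc_fl[OF p] by (simp add: y_def r_def)
    show ?thesis
    proof (cases "good r y \<and> wt E m r y = n")
      case True
      define t0 where "t0 = (Ob, n, cls r n y)"
      have t0: "t0 \<in> Tset" unfolding Tset_def t0_def using Ob True r_def by blast
      have yC: "y \<in> snd (snd t0)" by (simp add: t0_def cls_def conn_refl)
      have ind0: "ind t0 (Ob, n) p = 1" using p yC by (simp add: ind_def t0_def y_def r_def)
      have indo: "ind t (Ob, n) p = 0" if "t \<in> Tset" "t \<noteq> t0" for t
      proof (rule ccontr)
        assume "ind t (Ob, n) p \<noteq> 0"
        then have e: "Ob = fst t" "n = fst (snd t)" and yt: "y \<in> snd (snd t)" by (auto simp: ind_def y_def split: if_splits)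
        have "t0 = t" using T_unique[OF t0 that(1) _ _ yC yt] e by (simp add: t0_def)
        then show False using that by simp
      qed
      have "gmap a (Ob, n) p = (\<Sum>t\<in>insert t0 (Poly_Mapping.keys a). poly_mapping.lookup a t * ind t (Ob, n) p)"
        by (rule gmap_sup) auto
      also have "\<dots> = (\<Sum>t\<in>insert t0 (Poly_Mapping.keys a). if t = t0 then cf t0 else 0)"
      proof (rule sum.cong[OF refl])
        fix t assume "t \<in> insert t0 (Poly_Mapping.keys a)"
        then have "t \<in> Tset" using ka t0 by auto
        then show "poly_mapping.lookup a t * ind t (Ob, n) p = (if t = t0 then cf t0 else 0)"
          using indo ind0 la by auto
      qed
      also have "\<dots> = cf t0" by simp
      also have "\<dots> = F (Ob, n) (vec_of (xt t0))" using t0 by (simp add: cf_def t0_def)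
      also have "\<dots> = F (Ob, n) p"
      proof -
        have "xt t0 \<in> snd (snd t0)" using xt_prop(3)[OF t0] conn_refl by (simp add: cls_def)
        then have "conn r n y (xt t0)" by (simp add: t0_def cls_def)
        then have "path_component (Sset E m r n) (vec_of y) (vec_of (xt t0))" using conn_pc wy by blast
        then have "path_component (Sset E m r n) p (vec_of (xt t0))" using pcy path_component_trans by blast
        then show ?thesis using F_const[OF FC] r_def by metis
      qed
      finally show ?thesis .
    next
      case False
      have indz: "ind t (Ob, n) p = 0" if "t \<in> Tset" for t
      proof (rule ccontr)
        assume "ind t (Ob, n) p \<noteq> 0"
        then have e: "Ob = fst t" "n = fst (snd t)" and yt: "y \<in> snd (snd t)" by (auto simp: ind_def y_def split: if_splits)
        have c: "conn r n (xt t) y" using T_C(1)[OF that yt] e r_def by simp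
        have g: "good r (xt t)" and wn: "wt E m r (xt t) = n" using xt_prop(1,2)[OF that] e r_def by auto
        have "good r y" "wt E m r y = n" using good_conn(1,2)[OF g] c wn by auto
        then show False using False by simp
      qed
      have "gmap a (Ob, n) p = 0" unfolding gmap_def using indz ka by (intro sum.neutral) auto
      moreover have "F (Ob, n) p = 0"
      proof -
        obtain z where cz: "conn r n y z" and wz: "wt E m r z < n"
        proof (cases "wt E m r y < n")
          case True then show ?thesis using that conn_refl by blast
        next
          case False2: False
          then have wyn: "wt E m r y = n" using wy by simp
          then have "\<not> good r y" using False by simp
          then obtain z where "conn r (wt E m r y) y z" "\<not> wt E m r y \<le> wt E m r z" unfolding good_def by blast
          then show ?thesis using that wyn by auto
        qed
        have "path_component (Sset E m r n) (vec_of y) (vec_of z)" using conn_pc[OF cz wy] .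
        then have pcz: "path_component (Sset E m r n) p (vec_of z)" using pcy path_component_trans by blast
        have zS: "vec_of z \<in> Sset E m r (n - 1)" using vec_in_S wz by simp
        have "Umap E m F (Ob, n - 1) (vec_of z) = 0" using FU by simp
        then have "F (Ob, n) (vec_of z) = 0" using zS by (simp add: Umap_def r_def)
        then show ?thesis using F_const[OF FC] pcz r_def by metis
      qed
      ultimately show ?thesis by simp
    qed
  qed
  then have "gmap a = F" by (intro ext) (metis surj_pair)
  moreover have "a \<in> carrier FT" using ka by simp
  ultimately show ?thesis by blast
qed

lemma K_iso: "FT \<cong> KerU E m"
proof -
  have "gmap \<in> iso FT (KerU E m)"
  proof (rule isoI)
    show "gmap \<in> hom FT (KerU E m)"
    proof (rule homI)
      fix a assume "a \<in> carrier FT"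
      then show "gmap a \<in> carrier (KerU E m)" unfolding KerU_carrier using gmap_KK by simp
    next
      fix a b assume "a \<in> carrier FT" "b \<in> carrier FT"
      then show "gmap (a \<otimes>\<^bsub>FT\<^esub> b) = gmap a \<otimes>\<^bsub>KerU E m\<^esub> gmap b"
        by (simp add: KerU_mult gmap_add)
    qed
    show "bij_betw gmap (carrier FT) (carrier (KerU E m))"
      unfolding bij_betw_def KerU_carrier
    proof
      show "inj_on gmap (carrier FT)" by (rule gmap_inj)
      show "gmap ` carrier FT = KK"
      proof
        show "gmap ` carrier FT \<subseteq> KK" using gmap_KK by auto
        show "KK \<subseteq> gmap ` carrier FT" using gmap_onto by blast
      qed
    qed
  qed
  then show ?thesis by (rule is_isoI)
qed

lemma main_iso: "HGroup E m \<cong> KerU E m"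
  using iso_trans[OF H_iso K_iso] .

end

theorem lemma7p3:
  fixes E :: "'v::finite \<Rightarrow> 'v \<Rightarrow> bool" and m :: "'v \<Rightarrow> int"
  assumes "plumbing_forest E" and "neg_definite E m"
  shows "HGroup E m \<cong> KerU E m"
proof -
  interpret PF E m using assms by unfold_locales
  show ?thesis by (rule main_iso)
qed


end
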